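(* Suppose there are constants $C_1,C_2>0$ with $C_1q\le p(q)\le C_2q$ for all $q\in\mathbb N$, that $\mathbb E|\varepsilon|^\kappa<\infty$ for some $\kappa>3$, and that the sequence of nonnegative integers $(t_n)$ satisfies $t_nn^{-1/2}=\mathcal O(1)$. Then $$\sup_{z\in\mathcal B}\big|\hat g(z)-\mathbb E\hat g(z)\big|=\mathcal O\big(t_n^4\log(n)^{1/2}n^{-1/2}\big)\quad\text{almost surely}.$$
   Context: Let $\mathcal B=\{(r,\theta):0\le r\le 1,\ 0\le\theta\le 2\pi\}$ be the unit disc in polar coordinates, with probability measure $d\mu=\pi^{-1}r\,dr\,d\theta$, and $\mathcal D=\{(s,\phi):0\le s\le1,\ 0\le\phi\le2\pi\}$ with probability measure $d\lambda=2\pi^{-2}\sqrt{1-s^2}\,ds\,d\phi$. The normalized Radon transform is $\mathcal Rg(s,\phi)=\frac12(1-s^2)^{-1/2}\int_{-\sqrt{1-s^2}}^{\sqrt{1-s^2}}g(s\cos\phi-t\sin\phi,\ s\sin\phi+t\cos\phi)\,dt$. Let $\mathcal N=\{(l,m):m\in\mathbb N_0,\ l\in\{m,m-2,\dots,-m\}\}$; for $(l,m)\in\mathcal N$, $R_m^{|l|}(r)=\sum_{j=0}^{(m-|l|)/2}(-1)^j\frac{(m-j)!}{j!((m+|l|)/2-j)!((m-|l|)/2-j)!}r^{m-2j}$, $\varphi_{(l,m)}(r,\theta)=\sqrt{m+1}R_m^{|l|}(r)e^{il\theta}$, $\psi_{(l,m)}(s,\phi)=U_m(s)e^{il\phi}$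 with $U_m$ the Chebyshev polynomial of the second kind; $\varphi_{(l,m)}=\psi_{(l,m)}=0$ for $(l,m)\notin\mathcal N$. Design and model: for $p,q\in\mathbb N$ let $\mathbf K=\{(k_1,k_2):0\le k_1\le q-1,\ 0\le k_2\le p-1\}$, $n=pq$, cells $G_{\mathbf k}=\{(s,\phi)\in\mathcal D: k_1/q\le s\le (k_1+1)/q,\ 2\pi k_2/p\le\phi\le2\pi(k_2+1)/p\}$, weights $w_{\mathbf k}=\lambda(G_{\mathbf k})$, design points $z_{\mathbf k}=(z^1_{k_1},z^2_{k_2})$ with $z^2_{k_2}=2\pi(k_2+\tfrac12)/p$ and $z^1_{k_1}$ solving $\int_{k_1/q}^{(k_1+1)/q}(s-z^1_{k_1})\sqrt{1-s^2}\,ds=0$. Asymptotics are $q\to\infty$ with $p=p(q)$ (written $n\to\infty$). Observations: $Y_{\mathbf k}=\mathcal Rg(z_{\mathbf k})+\varepsilon_{\mathbf k}$, where $g$ is a function on $\mathcal B$ and, for each $n$, the $\varepsilon_{\mathbf k}$, $\mathbf k\in\mathbf K$, are i.i.d. copies of a random variable $\varepsilon$ with $\mathbb E\varepsilon=0$ (triangular array). Estimator: $\hat R(l,m)=\sum_{\mathbf k}w_{\mathbf k}\overline{\psi_{(l,m)}(z_{\mathbf k})}Y_{\mathbf k}$ and $\hat g(r,\theta)=\sum_{m=0}^{t_n}\sum_{l=-m}^m\sqrt{m+1}\,\varphi_{(l,m)}(r,\theta)\hat R(l,m)$. *)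

theory Defs
  imports "HOL-Probability.Probability" "HOL-Library.Landau_Symbols"
begin

definition inN :: "int \<Rightarrow> nat \<Rightarrow> bool" where
  "inN l m \<longleftrightarrow> nat \<bar>l\<bar> \<le> m \<and> even (m - nat \<bar>l\<bar>)"

definition zernR :: "nat \<Rightarrow> nat \<Rightarrow> real \<Rightarrow> real" where
  "zernR m a r = (\<Sum>j=0..(m - a) div 2.
      (-1)^j * (fact (m - j) :: real)
        / ((fact j :: real) * fact ((m + a) div 2 - j) * fact ((m - a) div 2 - j))
      * r ^ (m - 2 * j))"

fun chebU :: "nat \<Rightarrow> real \<Rightarrow> real" where
  "chebU 0 s = 1"
| "chebU (Suc 0) s = 2 * s"
| "chebU (Suc (Suc n)) s = 2 * s * chebU (Suc n) s - chebU n s"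

definition zphi :: "int \<Rightarrow> nat \<Rightarrow> real \<Rightarrow> real \<Rightarrow> complex" where
  "zphi l m r \<theta> = (if inN l m
     then complex_of_real (sqrt (real m + 1) * zernR m (nat \<bar>l\<bar>) r) * exp (\<i> * of_int l * complex_of_real \<theta>)
     else 0)"

definition cpsi :: "int \<Rightarrow> nat \<Rightarrow> real \<Rightarrow> real \<Rightarrow> complex" where
  "cpsi l m s \<phi> = (if inN l m
     then complex_of_real (chebU m s) * exp (\<i> * of_int l * complex_of_real \<phi>)
     else 0)"

text \<open>Normalized Radon transform of g (g given in Cartesian coordinates).\<close>
definition radon :: "(real \<times> real \<Rightarrow> real) \<Rightarrow> real \<Rightarrow> real \<Rightarrow> real" where
  "radon g s \<phi> = 1/2 * (1 - s^2) powr (-1/2) *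
     (LBINT t = - sqrt (1 - s^2)..sqrt (1 - s^2).
        g (s * cos \<phi> - t * sin \<phi>, s * sin \<phi> + t * cos \<phi>))"

text \<open>Design (P = p, Q = q).\<close>
definition Kset :: "nat \<Rightarrow> nat \<Rightarrow> (nat \<times> nat) set" where
  "Kset P Q = {0..<Q} \<times> {0..<P}"

text \<open>w_k = lambda(G_k), with d lambda = 2 pi^-2 sqrt(1-s^2) ds dphi (depends only on k1).\<close>
definition cellw :: "nat \<Rightarrow> nat \<Rightarrow> nat \<Rightarrow> real" where
  "cellw P Q k1 = 2 / pi^2 * (LBINT s = real k1 / real Q..real (k1 + 1) / real Q. sqrt (1 - s^2))
                  * (2 * pi / real P)"

definition z1 :: "nat \<Rightarrow> nat \<Rightarrow> real" where
  "z1 Q k1 = (THE z. (LBINT s = real k1 / real Q..real (k1 + 1) / real Q. (s - z) * sqrt (1 - s^2)) = 0)"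

definition z2 :: "nat \<Rightarrow> nat \<Rightarrow> real" where
  "z2 P k2 = 2 * pi * (real k2 + 1/2) / real P"

text \<open>Estimated coefficients, given realized errors e_k; Y_k = Rg(z_k) + e_k.\<close>
definition Rhat :: "(real \<times> real \<Rightarrow> real) \<Rightarrow> nat \<Rightarrow> nat \<Rightarrow> (nat \<times> nat \<Rightarrow> real) \<Rightarrow> int \<Rightarrow> nat \<Rightarrow> complex" where
  "Rhat g P Q e l m = (\<Sum>k\<in>Kset P Q.
      complex_of_real (cellw P Q (fst k)) * cnj (cpsi l m (z1 Q (fst k)) (z2 P (snd k)))
      * complex_of_real (radon g (z1 Q (fst k)) (z2 P (snd k)) + e k))"

definition ghat :: "(real \<times> real \<Rightarrow> real) \<Rightarrow> nat \<Rightarrow> nat \<Rightarrow> nat \<Rightarrow> (nat \<times> nat \<Rightarrow> real) \<Rightarrow> real \<Rightarrow> real \<Rightarrow> complex" where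
  "ghat g P Q T e r \<theta> = (\<Sum>m=0..T. \<Sum>l\<in>{- int m..int m}.
      complex_of_real (sqrt (real m + 1)) * zphi l m r \<theta> * Rhat g P Q e l m)"

end

theory Submission
  imports Defs
begin


definition tmZ :: "nat \<Rightarrow> nat \<Rightarrow> nat \<Rightarrow> nat \<Rightarrow> real \<Rightarrow> real" where
 "tmZ A B i s \<theta> = real (A choose i) * real (B choose s) * (- sin \<theta>)^i * cos \<theta>^(A-i) * sin \<theta>^s * cos \<theta>^(B-s)"

definition cZ :: "nat \<Rightarrow> nat \<Rightarrow> nat \<Rightarrow> real \<Rightarrow> real" where
 "cZ A B c \<theta> = (\<Sum>i\<le>A. \<Sum>s\<le>B. if A - i + s = c then tmZ A B i s \<theta> else 0)"

lemma cZ_big: "c > A + B \<Longrightarrow> cZ A B c \<theta> = 0"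
  unfolding cZ_def by (intro sum.neutral ballI) auto

lemma cZ_expand:
  "(cos \<theta> * x - sin \<theta>)^A * (sin \<theta> * x + cos \<theta>)^B = (\<Sum>c\<le>A+B. cZ A B c \<theta> * x^c)"
proof -
  have e1: "(cos \<theta> * x - sin \<theta>)^A = (\<Sum>i\<le>A. real (A choose i) * (- sin \<theta>)^i * (cos \<theta> * x)^(A-i))"
    using binomial_ring[of "- sin \<theta>" "cos \<theta> * x" A] by simp
  have e2: "(sin \<theta> * x + cos \<theta>)^B = (\<Sum>s\<le>B. real (B choose s) * (sin \<theta> * x)^s * cos \<theta>^(B-s))"
    using binomial_ring[of "sin \<theta> * x" "cos \<theta>" B] by simp
  have "(cos \<theta> * x - sin \<theta>)^A * (sin \<theta> * x + cos \<theta>)^B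
      = (\<Sum>i\<le>A. \<Sum>s\<le>B. tmZ A B i s \<theta> * x^(A - i + s))"
    unfolding e1 e2 sum_product tmZ_def
  proof (intro sum.cong refl)
    fix i s assume "i \<in> {..A}" "s \<in> {..B}"
    then have "x^(A - i + s) = x^(A-i) * x^s" by (simp only: power_add)
    then show "real (A choose i) * (- sin \<theta>) ^ i * (cos \<theta> * x) ^ (A - i) *
         (real (B choose s) * (sin \<theta> * x) ^ s * cos \<theta> ^ (B - s)) =
         real (A choose i) * real (B choose s) * (- sin \<theta>) ^ i * cos \<theta> ^ (A - i) * sin \<theta> ^ s *
         cos \<theta> ^ (B - s) * x ^ (A - i + s)"
      by (simp add: power_mult_distrib)
  qed
  also have "\<dots> = (\<Sum>i\<le>A. \<Sum>s\<le>B. \<Sum>c\<le>A+B. if A - i + s = c then tmZ A B i s \<theta> * x^c else 0)"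
    by (intro sum.cong refl) (auto simp: sum.delta)
  also have "\<dots> = (\<Sum>i\<le>A. \<Sum>c\<le>A+B. \<Sum>s\<le>B. if A - i + s = c then tmZ A B i s \<theta> * x^c else 0)"
  proof (rule sum.cong[OF refl])
    fix i assume "i \<in> {..A}" show "(\<Sum>s\<le>B. \<Sum>c\<le>A+B. if A - i + s = c then tmZ A B i s \<theta> * x^c else 0) =
       (\<Sum>c\<le>A+B. \<Sum>s\<le>B. if A - i + s = c then tmZ A B i s \<theta> * x^c else 0)"
      by (rule sum.swap[of "\<lambda>s c. if A - i + s = c then tmZ A B i s \<theta> * x^c else 0"])
  qed
  also have "\<dots> = (\<Sum>c\<le>A+B. \<Sum>i\<le>A. \<Sum>s\<le>B. if A - i + s = c then tmZ A B i s \<theta> * x^c else 0)"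
    by (rule sum.swap[of "\<lambda>i c. \<Sum>s\<le>B. if A - i + s = c then tmZ A B i s \<theta> * x^c else 0"])
  also have "\<dots> = (\<Sum>c\<le>A+B. cZ A B c \<theta> * x^c)"
    unfolding cZ_def sum_distrib_right
    by (intro sum.cong refl) auto
  finally show ?thesis .
qed

lemma cZ_alt: "cZ A B c = (\<lambda>\<theta>. \<Sum>i\<le>A. \<Sum>s\<le>B. (if A - i + s = c then 1 else 0) * tmZ A B i s \<theta>)"
  unfolding cZ_def by (intro ext sum.cong refl) auto

lemma cZ_has_deriv: "(cZ A B c has_real_derivative deriv (cZ A B c) \<theta>) (at \<theta>)"
proof -
  have "\<exists>D. (cZ A B c has_real_derivative D) (at \<theta>)"
    unfolding cZ_alt tmZ_def by (rule exI, (rule derivative_eq_intros refl)+)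
  then show ?thesis using DERIV_imp_deriv by metis
qed

lemma cZ_big_fun: "c > A + B \<Longrightarrow> cZ A B c = (\<lambda>_. 0)"
  using cZ_big by auto

lemma cZ_deriv_big: "c > A + B \<Longrightarrow> deriv (cZ A B c) \<theta> = 0"
  using cZ_big_fun by simp

lemma alg_core: fixes a b c sn x XA YB P Q :: real
 assumes h1: "a * XA = a * (c*x - sn) * P" and h2: "b * YB = b * (sn*x + c) * Q"
 shows "a*P*(-sn*x - c)*YB + XA*(b*Q*(c*x - sn)) = x*((a+b)*(XA*YB) - x*(a*P*c*YB + XA*(b*Q * sn))) - (a*P*c*YB + XA*(b*Q * sn))"
proof -
  have "x*((a+b)*(XA*YB)) = x*(a*XA)*YB + x*XA*(b*YB)" by algebra
  also have "\<dots> = x*(a * (c*x - sn) * P)*YB + x*XA*(b * (sn*x + c) * Q)" unfolding h1 h2 ..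
  finally have e: "x*((a+b)*(XA*YB)) = x*(a * (c*x - sn) * P)*YB + x*XA*(b * (sn*x + c) * Q)" .
  show ?thesis unfolding right_diff_distrib e by algebra
qed

lemma cZ_ode:
  fixes A B :: nat and \<theta> :: real
  defines "n \<equiv> A + B"
  defines "f \<equiv> (\<lambda>c. cZ A B c \<theta>)"
  defines "d \<equiv> (\<lambda>c. deriv (cZ A B c) \<theta>)"
  assumes "c \<le> n"
  shows "d c = (if c = 0 then 0 else real (n + 1 - c) * f (c - 1)) - real (c + 1) * f (c + 1)"
proof -
  define X where "X = (\<lambda>x::real. cos \<theta> * x - sin \<theta>)"
  define Y where "Y = (\<lambda>x::real. sin \<theta> * x + cos \<theta>)"
  define F where "F = (\<lambda>x. X x ^ A * Y x ^ B)"
  define Ft where "Ft = (\<lambda>x. real A * X x ^ (A - 1) * (- sin \<theta> * x - cos \<theta>) * Y x ^ B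
      + X x ^ A * (real B * Y x ^ (B - 1) * (cos \<theta> * x - sin \<theta>)))"
  define Fx where "Fx = (\<lambda>x. real A * X x ^ (A - 1) * cos \<theta> * Y x ^ B
      + X x ^ A * (real B * Y x ^ (B - 1) * sin \<theta>))"
  have F_eq: "F x = (\<Sum>c\<le>n. f c * x^c)" for x
    unfolding F_def X_def Y_def f_def n_def by (rule cZ_expand)
  have Ft_eq: "(\<Sum>c\<le>n. d c * x^c) = Ft x" for x
  proof -
    have h1: "((\<lambda>t. (cos t * x - sin t)^A * (sin t * x + cos t)^B) has_real_derivative Ft x) (at \<theta>)"
      unfolding Ft_def X_def Y_def
      by (auto intro!: derivative_eq_intros simp: algebra_simps)
    have h2: "((\<lambda>t. (\<Sum>c\<le>n. cZ A B c t * x^c)) has_real_derivative (\<Sum>c\<le>n. d c * x^c)) (at \<theta>)"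
      unfolding d_def by (intro DERIV_sum DERIV_cmult_right cZ_has_deriv)
    have "(\<lambda>t. (cos t * x - sin t)^A * (sin t * x + cos t)^B) = (\<lambda>t. (\<Sum>c\<le>n. cZ A B c t * x^c))"
      unfolding n_def by (intro ext cZ_expand)
    with h1 h2 show ?thesis using DERIV_unique by metis
  qed
  have Fx_eq: "(\<Sum>c\<le>n. f c * (real c * x^(c - 1))) = Fx x" for x
  proof -
    have h1: "(F has_real_derivative Fx x) (at x)"
      unfolding Fx_def F_def X_def Y_def
      by (auto intro!: derivative_eq_intros simp: algebra_simps)
    have h2: "((\<lambda>x. (\<Sum>c\<le>n. f c * x^c)) has_real_derivative (\<Sum>c\<le>n. f c * (real c * x^(c - 1)))) (at x)"
      by (intro DERIV_sum DERIV_cmult) (auto intro!: derivative_eq_intros)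
    have "F = (\<lambda>x. (\<Sum>c\<le>n. f c * x^c))" using F_eq by auto
    with h1 h2 show ?thesis using DERIV_unique by metis
  qed
  have alg: "Ft x = x * (real n * F x - x * Fx x) - Fx x" for x
  proof -
    have a1: "real A * X x ^ A = real A * (cos \<theta> * x - sin \<theta>) * X x ^ (A - 1)"
      using X_def by (cases A) auto
    have b1: "real B * Y x ^ B = real B * (sin \<theta> * x + cos \<theta>) * Y x ^ (B - 1)"
      using Y_def by (cases B) auto
    show ?thesis unfolding Ft_def Fx_def F_def n_def of_nat_add
      by (rule alg_core[OF a1 b1])
  qed
  define E where "E = (\<lambda>c. d c - (if c = 0 then 0 else real (n + 1 - c) * f (c - 1)) + real (c + 1) * f (c + 1))"
  have fbig: "c > n \<Longrightarrow> f c = 0" for c unfolding f_def n_def using cZ_big by auto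
  have dbig: "c > n \<Longrightarrow> d c = 0" for c unfolding d_def n_def using cZ_deriv_big by auto
  have "(\<Sum>c\<le>Suc n. E c * x^c) = 0" for x
  proof -
    have s1: "(\<Sum>c\<le>Suc n. d c * x^c) = (\<Sum>c\<le>n. d c * x^c)"
      using dbig[of "Suc n"] by simp
    have s2: "(\<Sum>c\<le>Suc n. (if c = 0 then 0 else real (n + 1 - c) * f (c - 1)) * x^c)
        = (\<Sum>c\<le>n. real (n - c) * f c * x^(Suc c))"
      by (subst sum.atMost_Suc_shift) simp
    have s3: "(\<Sum>c\<le>Suc n. real (c + 1) * f (c + 1) * x^c) = (\<Sum>c\<le>n. f c * (real c * x^(c - 1)))"
    proof -
      have "(\<Sum>c\<le>Suc n. real (c + 1) * f (c + 1) * x^c) = (\<Sum>c\<le>n. real (c + 1) * f (c + 1) * x^c)"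
        using fbig[of "Suc (Suc n)"] by simp
      also have "\<dots> = (\<Sum>c\<le>Suc n. f c * (real c * x^(c - 1)))"
        by (subst sum.atMost_Suc_shift) (simp add: algebra_simps)
      also have "\<dots> = (\<Sum>c\<le>n. f c * (real c * x^(c - 1)))"
        using fbig[of "Suc n"] by simp
      finally show ?thesis .
    qed
    have s4: "(\<Sum>c\<le>n. real (n - c) * f c * x^(Suc c)) = x * (real n * F x - x * Fx x)"
    proof -
      have "(\<Sum>c\<le>n. real (n - c) * f c * x^(Suc c)) = x * (\<Sum>c\<le>n. real n * (f c * x^c) - x * (f c * (real c * x^(c - 1))))"
        unfolding sum_distrib_left
      proof (rule sum.cong[OF refl])
        fix c assume "c \<in> {..n}"
        then have "c \<le> n" by simp
        have "x * (x * x^(c-1)) = x^(Suc c)" if "c > 0"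
          using that by (cases c) auto
        then show "real (n - c) * f c * x ^ Suc c = x * (real n * (f c * x ^ c) - x * (f c * (real c * x ^ (c - 1))))"
          using \<open>c \<le> n\<close> by (cases "c = 0") (auto simp: of_nat_diff algebra_simps)
      qed
      also have "\<dots> = x * (real n * F x - x * Fx x)"
        unfolding F_eq Fx_eq[symmetric] sum_subtractf sum_distrib_left by simp
      finally show ?thesis .
    qed
    have "(\<Sum>c\<le>Suc n. E c * x^c) = (\<Sum>c\<le>Suc n. d c * x^c)
       - (\<Sum>c\<le>Suc n. (if c = 0 then 0 else real (n + 1 - c) * f (c - 1)) * x^c)
       + (\<Sum>c\<le>Suc n. real (c + 1) * f (c + 1) * x^c)"
      unfolding E_def by (simp add: sum.distrib sum_subtractf algebra_simps)
    also have "\<dots> = Ft x - x * (real n * F x - x * Fx x) + Fx x"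
      unfolding s1 s2 s3 s4 Ft_eq Fx_eq ..
    also have "\<dots> = 0" using alg by simp
    finally show ?thesis .
  qed
  then have "\<forall>c\<le>Suc n. E c = 0" using polyfun_eq_0[of E "Suc n"] by blast
  then have "E c = 0" using assms by simp
  then show ?thesis unfolding E_def by simp
qed

lemma cZ_zero: "cZ A B c 0 = (if c = A then 1 else 0)"
proof -
  have "cZ A B c 0 = (\<Sum>i\<le>A. \<Sum>s\<le>B. if A - i + s = c then (if i = 0 \<and> s = 0 then 1 else 0) else 0)"
    unfolding cZ_def tmZ_def by (intro sum.cong refl) (auto simp: power_0_left)
  also have "\<dots> = (\<Sum>i\<le>A. \<Sum>s\<le>B. if i = 0 then (if s = 0 then (if c = A then 1 else 0) else 0) else 0)"
    by (intro sum.cong refl) auto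
  also have "\<dots> = (\<Sum>i\<le>A. if i = 0 then (if c = A then 1 else 0) else 0)"
    by (intro sum.cong refl) (simp add: sum.delta)
  also have "\<dots> = (if c = A then 1 else 0)"
    by simp
  finally show ?thesis .
qed

lemma cZ_energy_deriv:
  fixes A B :: nat and \<theta> :: real
  defines "n \<equiv> A + B"
  shows "(\<Sum>c\<le>n. cZ A B c \<theta> * deriv (cZ A B c) \<theta> * (fact c * fact (n - c))) = 0"
proof -
  define f where "f = (\<lambda>c. cZ A B c \<theta>)"
  define d where "d = (\<lambda>c. deriv (cZ A B c) \<theta>)"
  define W :: "nat \<Rightarrow> real" where "W = (\<lambda>c. fact c * fact (n - c))"
  have fbig: "c > n \<Longrightarrow> f c = 0" for c unfolding f_def n_def using cZ_big by auto
  have ode: "c \<le> n \<Longrightarrow> d c = (if c = 0 then 0 else real (n + 1 - c) * f (c - 1)) - real (c + 1) * f (c + 1)" for c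
    unfolding d_def f_def n_def by (rule cZ_ode[unfolded n_def])
  have "(\<Sum>c\<le>n. f c * d c * W c) = (\<Sum>c\<le>n. f c * W c * (if c = 0 then 0 else real (n + 1 - c) * f (c - 1)))
      - (\<Sum>c\<le>n. f c * W c * (real (c + 1) * f (c + 1)))"
    unfolding sum_subtractf[symmetric] by (intro sum.cong refl) (simp add: ode algebra_simps)
  also have "\<dots> = 0"
  proof (cases n)
    case 0
    then show ?thesis using fbig[of 1] by simp
  next
    case (Suc m)
    have w: "W (Suc c) * real (n - c) = W c * real (c + 1)" if "c \<le> m" for c
    proof -
      have "n - c = Suc (m - c)" using that Suc by simp
      moreover have "n - Suc c = m - c" using that Suc by simp
      ultimately show ?thesis unfolding W_def by (simp add: algebra_simps)
    qed
    have "(\<Sum>c\<le>n. f c * W c * (if c = 0 then 0 else real (n + 1 - c) * f (c - 1)))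
        = (\<Sum>c\<le>m. f (Suc c) * W (Suc c) * (real (n - c) * f c))"
      unfolding Suc by (subst sum.atMost_Suc_shift) simp
    also have "\<dots> = (\<Sum>c\<le>m. f c * W c * (real (c + 1) * f (c + 1)))"
    proof (rule sum.cong[OF refl])
      fix c assume "c \<in> {..m}"
      then have wc: "W (Suc c) * real (n - c) = W c * real (c + 1)" using w by simp
      have "f (Suc c) * W (Suc c) * (real (n - c) * f c) = f (Suc c) * f c * (W (Suc c) * real (n - c))"
        by (simp add: ac_simps)
      also have "\<dots> = f (Suc c) * f c * (W c * real (c + 1))" by (simp only: wc)
      also have "\<dots> = f c * W c * (real (c + 1) * f (c + 1))" by (simp add: ac_simps)
      finally show "f (Suc c) * W (Suc c) * (real (n - c) * f c) = f c * W c * (real (c + 1) * f (c + 1))" .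
    qed
    also have "\<dots> = (\<Sum>c\<le>n. f c * W c * (real (c + 1) * f (c + 1)))"
      unfolding Suc using fbig[of "Suc (Suc m)"] Suc by simp
    finally show ?thesis by simp
  qed
  finally show ?thesis unfolding f_def d_def W_def .
qed

lemma cZ_energy:
  fixes A B :: nat and \<theta> :: real
  shows "(\<Sum>c\<le>A+B. (cZ A B c \<theta>)^2 * (fact c * fact (A + B - c))) = fact A * fact B"
proof -
  define N where "N = (\<lambda>t. (\<Sum>c\<le>A+B. (cZ A B c t)^2 * (fact c * fact (A + B - c) :: real)))"
  have "(N has_real_derivative 0) (at t)" for t
  proof -
    have "(N has_real_derivative (\<Sum>c\<le>A+B. (2 * cZ A B c t * deriv (cZ A B c) t) * (fact c * fact (A + B - c)))) (at t)"
      unfolding N_def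
      by (intro DERIV_sum DERIV_cmult_right) (auto intro!: derivative_eq_intros cZ_has_deriv)
    also have "(\<Sum>c\<le>A+B. (2 * cZ A B c t * deriv (cZ A B c) t) * (fact c * fact (A + B - c))) =
        2 * (\<Sum>c\<le>A+B. cZ A B c t * deriv (cZ A B c) t * (fact c * fact (A + B - c)))"
      by (simp add: sum_distrib_left algebra_simps)
    also have "\<dots> = 0" using cZ_energy_deriv[of A B t] by simp
    finally show ?thesis .
  qed
  then have "N \<theta> = N 0" using DERIV_isconst_all by blast
  also have "N 0 = fact A * fact B"
  proof -
    have "\<And>c. (if c = A then 1 else (0::real))^2 * (fact c * fact (A + B - c)) = (if c = A then fact A * fact B else 0)"
      by auto
    then show ?thesis unfolding N_def cZ_zero by (simp add: sum.delta)
  qed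
  finally show ?thesis unfolding N_def .
qed

lemma cZ_diag_bound: "(cZ A B A \<theta>)^2 \<le> 1"
proof -
  have "(cZ A B A \<theta>)^2 * (fact A * fact (A + B - A)) \<le> (\<Sum>c\<le>A+B. (cZ A B c \<theta>)^2 * (fact c * fact (A + B - c)))"
    by (rule member_le_sum) auto
  also have "\<dots> = fact A * fact B" by (rule cZ_energy)
  finally have "(cZ A B A \<theta>)^2 * (fact A * fact B) \<le> 1 * (fact A * fact B)" by simp
  moreover have "(0::real) < fact A * fact B" by simp
  ultimately show ?thesis by (meson mult_le_cancel_right_pos)
qed

lemma cZ_diag:
  assumes "B \<le> A"
  shows "cZ A B A \<theta> = (\<Sum>i\<le>B. (-1)^i * real (A choose i) * real (B choose i) * (sin \<theta>^2)^i * cos \<theta>^(A+B-2*i))"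
proof -
  have "cZ A B A \<theta> = (\<Sum>i\<le>A. if i \<le> B then tmZ A B i i \<theta> else 0)"
    unfolding cZ_def
  proof (rule sum.cong[OF refl])
    fix i assume "i \<in> {..A}"
    then have "\<And>s. (A - i + s = A) = (s = i)" by auto
    then show "(\<Sum>s\<le>B. if A - i + s = A then tmZ A B i s \<theta> else 0) = (if i \<le> B then tmZ A B i i \<theta> else 0)"
      by (simp add: sum.delta')
  qed
  also have "\<dots> = (\<Sum>i\<le>B. tmZ A B i i \<theta>)"
    using assms by (simp add: sum.If_cases Int_absorb1 atMost_subset_iff Collect_conv_if
        flip: atMost_def)
  also have "\<dots> = (\<Sum>i\<le>B. (-1)^i * real (A choose i) * real (B choose i) * (sin \<theta>^2)^i * cos \<theta>^(A+B-2*i))"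
  proof (rule sum.cong[OF refl])
    fix i assume "i \<in> {..B}"
    then have "i \<le> B" "i \<le> A" using assms by auto
    then have "A - i + (B - i) = A + B - 2*i" by simp
    then have c1: "cos \<theta> ^ (A - i) * cos \<theta> ^ (B - i) = cos \<theta>^(A+B-2*i)"
      by (simp only: power_add[symmetric])
    have "(- sin \<theta>)^i * sin \<theta>^i = (- sin \<theta> * sin \<theta>)^i" by (rule power_mult_distrib[symmetric])
    also have "\<dots> = ((-1) * sin \<theta>^2)^i" by (simp add: power2_eq_square)
    also have "\<dots> = (-1)^i * (sin \<theta>^2)^i" by (rule power_mult_distrib)
    finally have c2: "(- sin \<theta>)^i * sin \<theta>^i = (-1)^i * (sin \<theta>^2)^i" .
    have "tmZ A B i i \<theta> = real (A choose i) * real (B choose i) * ((- sin \<theta>)^i * sin \<theta>^i) * (cos \<theta> ^ (A - i) * cos \<theta> ^ (B - i))"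
      unfolding tmZ_def by (simp only: ac_simps)
    also have "\<dots> = real (A choose i) * real (B choose i) * ((-1)^i * (sin \<theta>^2)^i) * cos \<theta>^(A+B-2*i)"
      unfolding c1 c2 ..
    finally show "tmZ A B i i \<theta> = (-1)^i * real (A choose i) * real (B choose i) * (sin \<theta>^2)^i * cos \<theta>^(A+B-2*i)"
      by (simp only: ac_simps)
  qed
  finally show ?thesis .
qed

lemma zid_step1:
  fixes r :: real
  assumes "i \<le> B" "B \<le> A"
  shows "(-1)^i * (1 - r^2)^i * r^(A+B-2*i) = (\<Sum>j\<le>B. (-1)^j * real (i choose j) * r^(A+B-2*j))"
proof -
  have "(1 - r^2)^i = (\<Sum>j\<le>i. real (i choose j) * 1^j * (- (r^2))^(i-j))"
    using binomial_ring[of 1 "- (r^2)" i] by simp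
  then have "(-1)^i * (1 - r^2)^i * r^(A+B-2*i) = (\<Sum>j\<le>i. (-1)^i * (real (i choose j) * (- (r^2))^(i-j)) * r^(A+B-2*i))"
    by (simp add: sum_distrib_left sum_distrib_right)
  also have "\<dots> = (\<Sum>j\<le>i. (-1)^j * real (i choose j) * r^(A+B-2*j))"
  proof (rule sum.cong[OF refl])
    fix j assume "j \<in> {..i}"
    then have j: "j \<le> i" by simp
    have s: "(-1::real)^i * (-1)^(i-j) = (-1)^j"
    proof -
      have h: "(-1::real)^i = (-1)^j * (-1)^(i-j)" using j by (simp add: power_add[symmetric])
      have "(-1::real)^i * (-1)^(i-j) = (-1)^j * ((-1)^(i-j) * (-1)^(i-j))"
        unfolding h by (simp only: mult.assoc)
      also have "\<dots> = (-1)^j * ((-1) * (-1))^(i-j)" by (simp only: power_mult_distrib)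
      also have "\<dots> = (-1)^j" by simp
      finally show ?thesis .
    qed
    have e: "2 * (i - j) + (A + B - 2 * i) = A + B - 2 * j" using j assms by simp
    have "(-1)^i * (real (i choose j) * (- (r^2))^(i-j)) * r^(A+B-2*i)
        = ((-1)^i * (-1)^(i-j)) * real (i choose j) * (r^(2*(i-j)) * r^(A+B-2*i))"
    proof -
      have "(- (r^2))^(i-j) = (-1)^(i-j) * (r^2)^(i-j)"
        by (rule power_minus)
      also have "(r^2)^(i-j) = r^(2*(i-j))" by (rule power_mult[symmetric])
      finally have "(- (r^2))^(i-j) = (-1)^(i-j) * r^(2*(i-j))" .
      then show ?thesis by (simp only: ac_simps)
    qed
    also have "\<dots> = (-1)^j * real (i choose j) * r^(A+B-2*j)"
      unfolding s by (simp only: power_add[symmetric] e)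
    finally show "(-1)^i * (real (i choose j) * (- (r^2))^(i-j)) * r^(A+B-2*i) = (-1)^j * real (i choose j) * r^(A+B-2*j)" .
  qed
  also have "\<dots> = (\<Sum>j\<le>B. (-1)^j * real (i choose j) * r^(A+B-2*j))"
    by (rule sum.mono_neutral_left) (use assms in auto)
  finally show ?thesis .
qed

lemma zid_comb:
  assumes "j \<le> B" "B \<le> A"
  shows "(\<Sum>i\<le>B. (A choose i) * (B choose i) * (i choose j)) = (A choose j) * ((A + B - j) choose (B - j))"
proof -
  define g where "g = (\<lambda>i. (A choose i) * (B choose i) * (i choose j))"
  have "(\<Sum>i\<le>B. g i) = (\<Sum>i\<in>{j..B}. g i)"
    by (rule sum.mono_neutral_right) (auto simp: g_def)
  also have "\<dots> = (\<Sum>t\<in>{0..B-j}. g (t + j))"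
  proof -
    have "{j..B} = {0 + j..(B - j) + j}" using assms by simp
    then show ?thesis by (simp only: sum.shift_bounds_cl_nat_ivl)
  qed
  also have "\<dots> = (\<Sum>t\<in>{0..B-j}. (A choose j) * (((A - j) choose t) * (B choose ((B - j) - t))))"
  proof (rule sum.cong)
    fix t assume "t \<in> {0..B-j}"
    then have t: "t + j \<le> B" using assms by simp
    have "(A choose (t + j)) * ((t + j) choose j) = (A choose j) * ((A - j) choose t)"
      using choose_mult[of j "t + j" A] t assms by simp
    moreover have "B choose (t + j) = B choose ((B - j) - t)"
      using binomial_symmetric[of "t + j" B] t by (simp add: diff_diff_add add.commute)
    ultimately show "g (t + j) = (A choose j) * (((A - j) choose t) * (B choose ((B - j) - t)))"
      unfolding g_def by (metis mult.assoc mult.commute)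
  qed (auto)
  also have "\<dots> = (A choose j) * (\<Sum>t\<le>B-j. ((A - j) choose t) * (B choose ((B - j) - t)))"
    by (simp only: sum_distrib_left atLeast0AtMost)
  also have "\<dots> = (A choose j) * ((A - j + B) choose (B - j))"
    by (simp only: vandermonde)
  also have "A - j + B = A + B - j" using assms by simp
  finally show ?thesis unfolding g_def .
qed

lemma zid_comb_real:
  assumes "j \<le> B" "B \<le> A"
  shows "(\<Sum>i\<le>B. real (A choose i) * real (B choose i) * real (i choose j))
      = fact (A + B - j) / (fact j * fact (A - j) * fact (B - j))"
proof -
  have "(\<Sum>i\<le>B. real (A choose i) * real (B choose i) * real (i choose j))
      = real ((A choose j) * ((A + B - j) choose (B - j)))"
    using zid_comb[OF assms] by (metis (no_types, lifting) of_nat_mult of_nat_sum sum.cong)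
  also have "\<dots> = (fact A / (fact j * fact (A - j))) * (fact (A + B - j) / (fact (B - j) * fact (A + B - j - (B - j))))"
    using assms by (simp add: binomial_fact)
  also have "A + B - j - (B - j) = A" using assms by simp
  finally show ?thesis by (simp add: field_simps)
qed

lemma zid:
  fixes r :: real
  assumes "B \<le> A"
  shows "(\<Sum>i\<le>B. (-1)^i * real (A choose i) * real (B choose i) * (1 - r^2)^i * r^(A+B-2*i))
     = (\<Sum>j=0..B. (-1)^j * fact (A+B-j) / (fact j * fact (A-j) * fact (B-j)) * r^(A+B-2*j))"
proof -
  have "(\<Sum>i\<le>B. (-1)^i * real (A choose i) * real (B choose i) * (1 - r^2)^i * r^(A+B-2*i))
      = (\<Sum>i\<le>B. real (A choose i) * real (B choose i) * ((-1)^i * (1 - r^2)^i * r^(A+B-2*i)))"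
    by (simp add: ac_simps)
  also have "\<dots> = (\<Sum>i\<le>B. \<Sum>j\<le>B. real (A choose i) * real (B choose i) * ((-1)^j * real (i choose j) * r^(A+B-2*j)))"
    by (intro sum.cong refl) (simp add: zid_step1 assms sum_distrib_left)
  also have "\<dots> = (\<Sum>j\<le>B. \<Sum>i\<le>B. real (A choose i) * real (B choose i) * ((-1)^j * real (i choose j) * r^(A+B-2*j)))"
    by (rule sum.swap)
  also have "\<dots> = (\<Sum>j\<le>B. ((-1)^j * r^(A+B-2*j)) * (\<Sum>i\<le>B. real (A choose i) * real (B choose i) * real (i choose j)))"
    by (intro sum.cong refl) (simp add: sum_distrib_left ac_simps)
  also have "\<dots> = (\<Sum>j\<le>B. ((-1)^j * r^(A+B-2*j)) * (fact (A + B - j) / (fact j * fact (A - j) * fact (B - j))))"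
    by (intro sum.cong refl) (simp add: zid_comb_real assms)
  also have "\<dots> = (\<Sum>j=0..B. (-1)^j * fact (A+B-j) / (fact j * fact (A-j) * fact (B-j)) * r^(A+B-2*j))"
    by (simp add: atLeast0AtMost ac_simps)
  finally show ?thesis .
qed

lemma zernR_le1:
  assumes "a \<le> m" "even (m - a)" "0 \<le> r" "r \<le> 1"
  shows "\<bar>zernR m a r\<bar> \<le> 1"
proof -
  define A where "A = (m + a) div 2"
  define B where "B = (m - a) div 2"
  obtain k where k: "m - a = 2 * k" using assms(2) by (rule evenE)
  then have "m + a = 2 * (a + k)" using assms(1) by simp
  then have "A = a + k" "B = k" unfolding A_def B_def using k by simp_all
  then have AB: "A + B = m" "B \<le> A" using k assms(1) by simp_all
  define \<theta> where "\<theta> = arccos r"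
  have c: "cos \<theta> = r" unfolding \<theta>_def using assms by simp
  have "r^2 \<le> 1" using assms by (simp add: abs_square_le_1)
  then have s: "sin \<theta>^2 = 1 - r^2" unfolding \<theta>_def using assms
    by (simp add: sin_arccos)
  have "cZ A B A \<theta> = (\<Sum>i\<le>B. (-1)^i * real (A choose i) * real (B choose i) * (1 - r^2)^i * r^(A+B-2*i))"
    unfolding cZ_diag[OF AB(2)] s c ..
  also have "\<dots> = (\<Sum>j=0..B. (-1)^j * fact (A+B-j) / (fact j * fact (A-j) * fact (B-j)) * r^(A+B-2*j))"
    by (rule zid[OF AB(2)])
  also have "\<dots> = zernR m a r"
    unfolding zernR_def A_def B_def AB(1)[unfolded A_def B_def] ..
  finally have "zernR m a r = cZ A B A \<theta>" ..
  then have "(zernR m a r)^2 \<le> 1" using cZ_diag_bound by simp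
  then show ?thesis by (simp add: power2_le_iff_abs_le abs_square_le_1)
qed


lemma lbint_mono:
  fixes f g :: "real \<Rightarrow> real"
  assumes "a \<le> b" "continuous_on {a..b} f" "continuous_on {a..b} g" "\<And>x. x \<in> {a..b} \<Longrightarrow> f x \<le> g x"
  shows "(LBINT x=a..b. f x) \<le> (LBINT x=a..b. g x)"
  unfolding interval_integral_Icc[OF assms(1)]
  by (rule set_integral_mono) (use assms borel_integrable_atLeastAtMost' in auto)

lemma chebU_cos: "chebU m (cos \<phi>) = (\<Sum>k\<le>m. cos ((real m - 2 * real k) * \<phi>))"
proof -
  have "chebU m (cos \<phi>) = (\<Sum>k\<le>m. cos ((real m - 2 * real k) * \<phi>)) \<and>
        chebU (Suc m) (cos \<phi>) = (\<Sum>k\<le>Suc m. cos ((real (Suc m) - 2 * real k) * \<phi>))"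
  proof (induction m)
    case 0
    have "cos (- \<phi>) = cos \<phi>" by simp
    then show ?case by (simp add: algebra_simps)
  next
    case (Suc m)
    have tw: "2 * cos \<phi> * cos (x * \<phi>) = cos ((x + 1) * \<phi>) + cos ((x - 1) * \<phi>)" for x
      by (simp add: distrib_right left_diff_distrib cos_add cos_diff)
    have "chebU (Suc (Suc m)) (cos \<phi>) = 2 * cos \<phi> * chebU (Suc m) (cos \<phi>) - chebU m (cos \<phi>)"
      by simp
    also have "2 * cos \<phi> * chebU (Suc m) (cos \<phi>) = (\<Sum>k\<le>Suc m. 2 * cos \<phi> * cos ((real (Suc m) - 2 * real k) * \<phi>))"
    proof -
      have "chebU (Suc m) (cos \<phi>) = (\<Sum>k\<le>Suc m. cos ((real (Suc m) - 2 * real k) * \<phi>))"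
        using Suc.IH by blast
      then show ?thesis by (simp only: sum_distrib_left)
    qed
    also have "\<dots> = (\<Sum>k\<le>Suc m. cos ((real (Suc (Suc m)) - 2 * real k) * \<phi>)) + (\<Sum>k\<le>Suc m. cos ((real m - 2 * real k) * \<phi>))"
      unfolding tw sum.distrib by (simp add: algebra_simps)
    also have "(\<Sum>k\<le>Suc m. cos ((real m - 2 * real k) * \<phi>)) = chebU m (cos \<phi>) + cos ((real (Suc (Suc m))) * \<phi>)"
    proof -
      have "cos ((real m - 2 * real (Suc m)) * \<phi>) = cos ((real (Suc (Suc m))) * \<phi>)"
      proof -
        have "(real m - 2 * real (Suc m)) * \<phi> = - ((real (Suc (Suc m))) * \<phi>)" by (simp add: algebra_simps)
        then show ?thesis by (simp only: cos_minus)
      qed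
      then show ?thesis using Suc.IH by simp
    qed
    also have "(\<Sum>k\<le>Suc m. cos ((real (Suc (Suc m)) - 2 * real k) * \<phi>)) + (chebU m (cos \<phi>) + cos ((real (Suc (Suc m))) * \<phi>)) - chebU m (cos \<phi>)
        = (\<Sum>k\<le>Suc (Suc m). cos ((real (Suc (Suc m)) - 2 * real k) * \<phi>))"
    proof -
      have "cos ((real (Suc (Suc m)) - 2 * real (Suc (Suc m))) * \<phi>) = cos ((real (Suc (Suc m))) * \<phi>)"
      proof -
        have "(real (Suc (Suc m)) - 2 * real (Suc (Suc m))) * \<phi> = - ((real (Suc (Suc m))) * \<phi>)" by (simp add: algebra_simps)
        then show ?thesis by (simp only: cos_minus)
      qed
      then show ?thesis by simp
    qed
    finally show ?case using Suc.IH by simp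
  qed
  then show ?thesis by simp
qed

lemma chebU_bound:
  assumes "\<bar>s\<bar> \<le> 1"
  shows "\<bar>chebU m s\<bar> \<le> real m + 1"
proof -
  have "s = cos (arccos s)" using assms by simp
  then have "chebU m s = (\<Sum>k\<le>m. cos ((real m - 2 * real k) * arccos s))"
    by (metis chebU_cos)
  also have "\<bar>\<dots>\<bar> \<le> (\<Sum>k\<le>m. \<bar>cos ((real m - 2 * real k) * arccos s)\<bar>)"
    by (rule sum_abs)
  also have "\<dots> \<le> (\<Sum>k\<le>m. 1)"
    by (intro sum_mono) simp
  finally show ?thesis by simp
qed

lemma sqrt_lb: "0 \<le> s \<Longrightarrow> s \<le> b \<Longrightarrow> b \<le> 1 \<Longrightarrow> b - s \<le> sqrt (1 - s^2)"
proof -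
  assume h: "0 \<le> s" "s \<le> b" "b \<le> 1"
  have "(1 - s)^2 \<le> 1 - s^2" using h by (simp add: power2_eq_square algebra_simps mult_left_le)
  then have "1 - s \<le> sqrt (1 - s^2)" using h by (simp add: real_le_rsqrt)
  then show ?thesis using h by simp
qed

lemma cell_facts:
  fixes Q k1 :: nat
  assumes "k1 < Q"
  defines "a \<equiv> real k1 / real Q" and "b \<equiv> real (k1 + 1) / real Q"
  shows "0 \<le> a" "a < b" "b \<le> 1" "b - a = 1 / real Q"
  using assms by (auto simp: divide_simps)

lemma I0_pos:
  fixes a b :: real
  assumes "0 \<le> a" "a < b" "b \<le> 1"
  shows "0 < (LBINT s=a..b. sqrt (1 - s^2))"
proof -
  have "(LBINT s=a..b. b - s) = (b * b - b^2/2) - (b * a - a^2/2)"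
    by (rule interval_integral_FTC_finite)
       (use assms in \<open>auto intro!: continuous_intros derivative_eq_intros
          simp: has_real_derivative_iff_has_vector_derivative[symmetric] power2_eq_square\<close>)
  also have "\<dots> = (b - a)^2 / 2" by (simp add: power2_eq_square algebra_simps)
  also have "\<dots> > 0" using assms by simp
  finally have "0 < (LBINT s=a..b. b - s)" .
  also have "\<dots> \<le> (LBINT s=a..b. sqrt (1 - s^2))"
    by (rule lbint_mono) (use assms sqrt_lb in \<open>auto intro!: continuous_intros\<close>)
  finally show ?thesis .
qed

lemma I0_le:
  fixes a b :: real
  assumes "0 \<le> a" "a < b" "b \<le> 1"
  shows "(LBINT s=a..b. sqrt (1 - s^2)) \<le> b - a"
proof -
  have "(LBINT s=a..b. sqrt (1 - s^2)) \<le> (LBINT s=a..b. 1)"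
    by (rule lbint_mono) (use assms in \<open>auto intro!: continuous_intros simp: power_le_one\<close>)
  then show ?thesis by simp
qed

lemma z1_bounds:
  assumes "k1 < Q"
  shows "0 \<le> z1 Q k1 \<and> z1 Q k1 \<le> 1"
proof -
  define a where "a = real k1 / real Q"
  define b where "b = real (k1 + 1) / real Q"
  have ab: "0 \<le> a" "a < b" "b \<le> 1" using cell_facts[OF assms] unfolding a_def b_def by auto
  define I0 where "I0 = (LBINT s=a..b. sqrt (1 - s^2))"
  define I1 where "I1 = (LBINT s=a..b. s * sqrt (1 - s^2))"
  have I0: "I0 > 0" unfolding I0_def by (rule I0_pos[OF ab])
  have int0: "interval_lebesgue_integrable lborel a b (\<lambda>s. sqrt (1 - s^2))"
    using ab by (intro interval_integrable_continuous_on) (auto intro!: continuous_intros)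
  have int1: "interval_lebesgue_integrable lborel a b (\<lambda>s. s * sqrt (1 - s^2))"
    using ab by (intro interval_integrable_continuous_on) (auto intro!: continuous_intros)
  have Phi: "(LBINT s=a..b. (s - z) * sqrt (1 - s^2)) = I1 - z * I0" for z
  proof -
    have "(LBINT s=a..b. (s - z) * sqrt (1 - s^2)) = (LBINT s=a..b. s * sqrt (1 - s^2) - z * sqrt (1 - s^2))"
      by (simp add: left_diff_distrib)
    also have "\<dots> = I1 - z * I0"
      unfolding I0_def I1_def using int0 int1 by simp
    finally show ?thesis .
  qed
  have "z1 Q k1 = I1 / I0"
    unfolding z1_def a_def[symmetric] b_def[symmetric] Phi
  proof (rule the1_equality)
    show "\<exists>!z. I1 - z * I0 = 0"
    proof (rule ex1I[of _ "I1/I0"])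
      show "I1 - I1 / I0 * I0 = 0" using I0 by simp
      fix z assume "I1 - z * I0 = 0"
      then show "z = I1 / I0" using I0 by (simp add: field_simps)
    qed
    show "I1 - I1 / I0 * I0 = 0" using I0 by simp
  qed
  moreover have "a * I0 \<le> I1"
  proof -
    have "(LBINT s=a..b. (0::real)) \<le> (LBINT s=a..b. (s - a) * sqrt (1 - s^2))"
    proof (rule lbint_mono)
      fix x assume x: "x \<in> {a..b}"
      then have "x^2 \<le> 1" using ab by (simp add: power_le_one)
      then show "0 \<le> (x - a) * sqrt (1 - x^2)" using x by simp
    qed (use ab in \<open>auto intro!: continuous_intros\<close>)
    then show ?thesis unfolding Phi by simp
  qed
  moreover have "I1 \<le> b * I0"
  proof -
    have "(LBINT s=a..b. (s - b) * sqrt (1 - s^2)) \<le> (LBINT s=a..b. (0::real))"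
    proof (rule lbint_mono)
      fix x assume x: "x \<in> {a..b}"
      then have "x^2 \<le> 1" using ab by (simp add: power_le_one)
      then show "(x - b) * sqrt (1 - x^2) \<le> 0" using x by (simp add: mult_nonpos_nonneg)
    qed (use ab in \<open>auto intro!: continuous_intros\<close>)
    then show ?thesis unfolding Phi by simp
  qed
  ultimately show ?thesis using ab I0 by (auto simp: field_simps)
qed

lemma cellw_bounds:
  assumes "k1 < Q" "0 < P"
  shows "0 \<le> cellw P Q k1 \<and> cellw P Q k1 \<le> 4 / (pi * real P * real Q)"
proof -
  define a where "a = real k1 / real Q"
  define b where "b = real (k1 + 1) / real Q"
  have ab: "0 \<le> a" "a < b" "b \<le> 1" "b - a = 1 / real Q" using cell_facts[OF assms(1)] unfolding a_def b_def by auto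
  define I0 where "I0 = (LBINT s=a..b. sqrt (1 - s^2))"
  have I0: "0 < I0" "I0 \<le> 1 / real Q" unfolding I0_def using I0_pos[OF ab(1-3)] I0_le[OF ab(1-3)] ab(4) by auto
  have cw: "cellw P Q k1 = 4 / (pi * real P) * I0"
    unfolding cellw_def I0_def a_def b_def by (simp add: field_simps power2_eq_square)
  have le: "4 / (pi * real P) * I0 \<le> 4 / (pi * real P) * (1 / real Q)"
    using I0 assms by (intro mult_left_mono) auto
  have "0 \<le> 4 / (pi * real P) * I0" using I0 assms by simp
  moreover have "4 / (pi * real P) * (1 / real Q) = 4 / (pi * real P * real Q)" by simp
  ultimately show ?thesis unfolding cw using le by simp
qed


lemma exp_quad:
  fixes y :: real
  assumes "\<bar>y\<bar> \<le> 1"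
  shows "exp y \<le> 1 + y + y^2"
proof (cases "y \<ge> 0")
  case True
  then show ?thesis using exp_bound[of y] assms by simp
next
  case False
  define w where "w = - y"
  have w: "0 < w" "w \<le> 1" using False assms unfolding w_def by auto
  have e: "1 + w + w^2/2 \<le> exp w" using exp_lower_Taylor_quadratic[of w] w by simp
  have pos: "0 < 1 + w + w^2/2" using w by (simp add: add_pos_nonneg)
  have "exp y = 1 / exp w" unfolding w_def by (simp add: exp_minus field_simps)
  also have "\<dots> \<le> 1 / (1 + w + w^2/2)"
    using e pos by (intro divide_left_mono) auto
  also have "\<dots> \<le> 1 - w + w^2"
  proof -
    have "(1 - w + w^2) * (1 + w + w^2/2) = 1 + w^2/2 + w^3/2 + w^4/2"
      by (simp add: power2_eq_square power3_eq_cube power4_eq_xxxx field_simps)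
    also have "\<dots> \<ge> 1" using w by simp
    finally show ?thesis using pos by (simp add: divide_le_eq)
  qed
  finally show ?thesis unfolding w_def by simp
qed

context prob_space
begin

lemma chern:
  fixes Z :: "'i \<Rightarrow> 'a \<Rightarrow> real"
  assumes fin: "finite I" and ind: "indep_vars (\<lambda>_. borel) Z I"
    and bnd: "\<And>i x. i \<in> I \<Longrightarrow> x \<in> space M \<Longrightarrow> \<bar>Z i x\<bar> \<le> B"
    and mean: "\<And>i. i \<in> I \<Longrightarrow> expectation (Z i) = 0"
    and var: "\<And>i. i \<in> I \<Longrightarrow> expectation (\<lambda>x. (Z i x)^2) \<le> s"
    and l: "l > 0" "l * B \<le> 1"
  shows "prob {x\<in>space M. (\<Sum>i\<in>I. Z i x) \<ge> \<epsilon>} \<le> exp (- l * \<epsilon> + real (card I) * l^2 * s)"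
proof -
  have rv[measurable]: "i \<in> I \<Longrightarrow> Z i \<in> borel_measurable M" for i
    using ind unfolding indep_vars_def by auto
  have per: "(\<integral>\<^sup>+x. ennreal (exp (l * Z i x)) \<partial>M) \<le> ennreal (exp (l^2 * s))" if i: "i \<in> I" for i
  proof -
    have intZ: "integrable M (Z i)"
      by (rule integrable_const_bound[where B=B]) (use bnd i in auto)
    have intZ2: "integrable M (\<lambda>x. (Z i x)^2)"
    proof (rule integrable_const_bound[where B="B^2"])
      show "AE x in M. norm ((Z i x)^2) \<le> B^2"
        using bnd[OF i] by (auto intro!: AE_I2) (metis abs_ge_zero power2_abs power_mono)
    qed (use i in auto)
    have intE: "integrable M (\<lambda>x. exp (l * Z i x))"
    proof (rule integrable_const_bound[where B="exp (l * B)"])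
      show "AE x in M. norm (exp (l * Z i x)) \<le> exp (l * B)"
        using bnd[OF i] l by (auto intro!: AE_I2 mult_left_mono simp: abs_le_iff)
    qed (use i in auto)
    have "(\<integral>\<^sup>+x. ennreal (exp (l * Z i x)) \<partial>M) = ennreal (expectation (\<lambda>x. exp (l * Z i x)))"
      by (rule nn_integral_eq_integral) (use intE in auto)
    also have "expectation (\<lambda>x. exp (l * Z i x)) \<le> expectation (\<lambda>x. 1 + l * Z i x + l^2 * (Z i x)^2)"
    proof (rule integral_mono)
      show "integrable M (\<lambda>x. 1 + l * Z i x + l^2 * (Z i x)^2)"
        using intZ intZ2 by auto
      fix x assume "x \<in> space M"
      then have "\<bar>l * Z i x\<bar> \<le> 1"
        using bnd[OF i] l by (metis abs_mult abs_of_pos mult_left_mono order.trans less_imp_le)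
      then show "exp (l * Z i x) \<le> 1 + l * Z i x + l^2 * (Z i x)^2"
        using exp_quad[of "l * Z i x"] by (simp add: power_mult_distrib)
    qed (use intE in auto)
    also have "expectation (\<lambda>x. 1 + l * Z i x + l^2 * (Z i x)^2) = 1 + l * expectation (Z i) + l^2 * expectation (\<lambda>x. (Z i x)^2)"
      using intZ intZ2 by (simp add: prob_space)
    also have "\<dots> \<le> 1 + l^2 * s"
      using mean[OF i] var[OF i] by (simp add: mult_left_mono)
    also have "\<dots> \<le> exp (l^2 * s)" by (rule exp_ge_add_one_self)
    finally show ?thesis by (simp add: ennreal_leI)
  qed
  have "ennreal (prob {x\<in>space M. (\<Sum>i\<in>I. Z i x) \<ge> \<epsilon>}) = emeasure M {x\<in>space M. (\<Sum>i\<in>I. Z i x) \<ge> \<epsilon>}"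
    by (simp add: emeasure_eq_measure)
  also have "\<dots> \<le> ennreal (exp (-l*\<epsilon>)) * (\<integral>\<^sup>+x\<in>space M. exp (l * (\<Sum>i\<in>I. Z i x)) \<partial>M)"
    by (intro Chernoff_ineq_nn_integral_ge l) auto
  also have "(\<integral>\<^sup>+x\<in>space M. exp (l * (\<Sum>i\<in>I. Z i x)) \<partial>M) = (\<integral>\<^sup>+x. (\<Prod>i\<in>I. ennreal (exp (l * Z i x))) \<partial>M)"
    by (intro nn_integral_cong)
       (simp_all add: sum_distrib_left exp_sum fin prod_ennreal)
  also have "\<dots> = (\<Prod>i\<in>I. \<integral>\<^sup>+x. ennreal (exp (l * Z i x)) \<partial>M)"
    by (intro indep_vars_nn_integral fin indep_vars_compose2[OF ind]) auto
  also have "ennreal (exp (-l * \<epsilon>)) * \<dots> \<le> ennreal (exp (-l * \<epsilon>)) * (\<Prod>i\<in>I. ennreal (exp (l^2 * s)))"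
    by (intro mult_left_mono prod_mono_ennreal per) auto
  also have "\<dots> = ennreal (exp (-l*\<epsilon>) * (\<Prod>i\<in>I. exp (l^2 * s)))"
    by (simp add: ennreal_mult ennreal_power)
  also have "exp (-l*\<epsilon>) * (\<Prod>i\<in>I. exp (l^2 * s)) = exp (- l * \<epsilon> + real (card I) * l^2 * s)"
    by (simp add: exp_add[symmetric] exp_of_nat_mult[symmetric] mult.assoc)
  finally show ?thesis
    by (subst (asm) ennreal_le_iff) simp_all
qed

lemma distr_integral_eq:
  fixes f :: "real \<Rightarrow> real"
  assumes [measurable]: "X \<in> borel_measurable M" "Y \<in> borel_measurable M" "f \<in> borel_measurable borel"
    and d: "distr M borel X = distr M borel Y"
  shows "expectation (\<lambda>x. f (X x)) = expectation (\<lambda>x. f (Y x))"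
proof -
  have "expectation (\<lambda>x. f (X x)) = integral\<^sup>L (distr M borel X) f"
    by (rule integral_distr[symmetric]) auto
  also have "\<dots> = integral\<^sup>L (distr M borel Y) f" unfolding d ..
  also have "\<dots> = expectation (\<lambda>x. f (Y x))"
    by (rule integral_distr) auto
  finally show ?thesis .
qed

lemma distr_integrable_eq:
  assumes [measurable]: "X \<in> borel_measurable M" "Y \<in> borel_measurable M" "f \<in> borel_measurable borel"
    and d: "distr M borel X = distr M borel Y"
  shows "integrable M (\<lambda>x. f (X x)) \<longleftrightarrow> integrable M (\<lambda>x. (f :: real \<Rightarrow> real) (Y x))"
proof -
  have "integrable M (\<lambda>x. f (X x)) \<longleftrightarrow> integrable (distr M borel X) f"
    by (rule integrable_distr_eq[symmetric]) auto
  also have "\<dots> \<longleftrightarrow> integrable (distr M borel Y) f" unfolding d ..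
  also have "\<dots> \<longleftrightarrow> integrable M (\<lambda>x. f (Y x))"
    by (rule integrable_distr_eq) auto
  finally show ?thesis .
qed

lemma distr_prob_eq:
  assumes [measurable]: "X \<in> borel_measurable M" "Y \<in> borel_measurable M" "S \<in> sets borel"
    and d: "distr M borel X = distr M borel Y"
  shows "prob {x\<in>space M. X x \<in> S} = prob {x\<in>space M. Y x \<in> S}"
proof -
  have "prob {x\<in>space M. X x \<in> S} = measure (distr M borel X) S"
    by (subst measure_distr) (auto intro!: arg_cong[where f=prob])
  also have "\<dots> = measure (distr M borel Y) S" unfolding d ..
  also have "\<dots> = prob {x\<in>space M. Y x \<in> S}"
    by (subst measure_distr) (auto intro!: arg_cong[where f=prob])
  finally show ?thesis .
qed

lemma tail_bound:
  fixes \<epsilon> :: "'k \<Rightarrow> 'a \<Rightarrow> real" and b :: "'k \<Rightarrow> real"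
  assumes fin: "finite K" and ind: "indep_vars (\<lambda>_. borel) \<epsilon> K"
    and meas[measurable]: "\<And>k. \<epsilon> k \<in> borel_measurable M"
    and e0m[measurable]: "e0 \<in> borel_measurable M"
    and dis: "\<And>k. k \<in> K \<Longrightarrow> distr M borel (\<epsilon> k) = distr M borel e0"
    and int2: "integrable M (\<lambda>x. (e0 x)^2)"
    and \<tau>: "\<tau> > 0" and bb: "\<And>k. k \<in> K \<Longrightarrow> \<bar>b k\<bar> \<le> \<rho>" and \<rho>: "\<rho> > 0"
    and l: "l > 0" "2 * l * \<tau> \<le> 1"
    and \<mu>D: "real (card K) * \<bar>expectation (\<lambda>x. if \<bar>e0 x\<bar> \<le> \<tau> then e0 x else 0)\<bar> \<le> D"
  shows "prob {x\<in>space M. (\<forall>k\<in>K. \<bar>\<epsilon> k x\<bar> \<le> \<tau>) \<and> \<bar>\<Sum>k\<in>K. b k * \<epsilon> k x\<bar> > 2 * \<rho> * D}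
     \<le> 2 * exp (- l * D + real (card K) * l^2 * expectation (\<lambda>x. (e0 x)^2))"
proof -
  define tr where "tr = (\<lambda>y::real. if \<bar>y\<bar> \<le> \<tau> then y else 0)"
  have trm[measurable]: "tr \<in> borel_measurable borel" unfolding tr_def by measurable
  have trb: "\<bar>tr y\<bar> \<le> \<tau>" for y unfolding tr_def using \<tau> by auto
  have tr2: "(tr y)^2 \<le> y^2" for y unfolding tr_def by auto
  define \<mu> where "\<mu> = expectation (\<lambda>x. tr (e0 x))"
  define s0 where "s0 = expectation (\<lambda>x. (e0 x)^2)"
  have int_tr: "integrable M (\<lambda>x. tr (e0 x))"
    by (rule integrable_const_bound[where B=\<tau>]) (use trb in auto)
  have int_tr2: "integrable M (\<lambda>x. (tr (e0 x))^2)"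
    by (rule integrable_const_bound[where B="\<tau>^2"]) (use trb in \<open>auto intro!: AE_I2 simp: abs_le_square_iff, metis abs_ge_zero power2_abs power_mono\<close>)
  have mu_le: "\<bar>\<mu>\<bar> \<le> \<tau>"
  proof -
    have "\<bar>\<mu>\<bar> \<le> expectation (\<lambda>x. norm (tr (e0 x)))" unfolding \<mu>_def
      using integral_norm_bound[of M "\<lambda>x. tr (e0 x)"] by simp
    also have "\<dots> \<le> expectation (\<lambda>x. \<tau>)"
      by (rule integral_mono) (use trb int_tr in auto)
    also have "\<dots> = \<tau>" by (simp add: prob_space)
    finally show ?thesis .
  qed
  define Z where "Z = (\<lambda>k x. (b k / \<rho>) * (tr (\<epsilon> k x) - \<mu>))"
  have Zm[measurable]: "Z k \<in> borel_measurable M" for k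
    unfolding Z_def by (intro borel_measurable_times borel_measurable_const borel_measurable_diff measurable_compose[OF meas trm])
  have bq: "\<bar>b k / \<rho>\<bar> \<le> 1" if "k \<in> K" for k using bb[OF that] \<rho> by (simp add: abs_divide)
  have Zb: "\<bar>Z k x\<bar> \<le> 2 * \<tau>" if "k \<in> K" for k x
  proof -
    have "\<bar>Z k x\<bar> = \<bar>b k / \<rho>\<bar> * \<bar>tr (\<epsilon> k x) - \<mu>\<bar>" unfolding Z_def by (simp add: abs_mult)
    also have "\<dots> \<le> 1 * (\<tau> + \<tau>)"
      using bq[OF that] trb[of "\<epsilon> k x"] mu_le by (intro mult_mono) auto
    finally show ?thesis by simp
  qed
  have Etr: "expectation (\<lambda>x. tr (\<epsilon> k x)) = \<mu>" if "k \<in> K" for k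
    unfolding \<mu>_def by (rule distr_integral_eq) (use dis[OF that] in auto)
  have Etr2: "expectation (\<lambda>x. (tr (\<epsilon> k x) - \<mu>)^2) = expectation (\<lambda>x. (tr (e0 x) - \<mu>)^2)" if "k \<in> K" for k
    by (rule distr_integral_eq[where f="\<lambda>y. (tr y - \<mu>)^2"]) (use dis[OF that] in auto)
  have int_trk: "integrable M (\<lambda>x. tr (\<epsilon> k x))" for k
    by (rule integrable_const_bound[where B=\<tau>]) (use trb in auto)
  have var0: "expectation (\<lambda>x. (tr (e0 x) - \<mu>)^2) \<le> s0"
  proof -
    have "expectation (\<lambda>x. (tr (e0 x) - \<mu>)^2) = expectation (\<lambda>x. (tr (e0 x))^2 - 2 * \<mu> * tr (e0 x) + \<mu>^2)"
      by (rule Bochner_Integration.integral_cong[OF refl]) (simp add: power2_diff algebra_simps)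
    also have "\<dots> = expectation (\<lambda>x. (tr (e0 x))^2) - 2 * \<mu> * \<mu> + \<mu>^2"
      using int_tr int_tr2 by (simp add: prob_space \<mu>_def)
    also have "\<dots> \<le> expectation (\<lambda>x. (tr (e0 x))^2)" by (simp add: power2_eq_square)
    also have "\<dots> \<le> s0" unfolding s0_def
      by (rule integral_mono) (use int_tr2 int2 tr2 in auto)
    finally show ?thesis .
  qed
  have EZ: "expectation (Z k) = 0" if "k \<in> K" for k
    unfolding Z_def using int_trk[of k] Etr[OF that] by (simp add: prob_space)
  have EZ2: "expectation (\<lambda>x. (Z k x)^2) \<le> s0" if "k \<in> K" for k
  proof -
    have "expectation (\<lambda>x. (Z k x)^2) = (b k / \<rho>)^2 * expectation (\<lambda>x. (tr (\<epsilon> k x) - \<mu>)^2)"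
    proof -
      have "(\<lambda>x. (Z k x)^2) = (\<lambda>x. (b k / \<rho>)^2 * (tr (\<epsilon> k x) - \<mu>)^2)"
        unfolding Z_def by (simp only: power_mult_distrib)
      then show ?thesis by (simp only: integral_mult_right_zero)
    qed
    also have "\<dots> \<le> 1 * expectation (\<lambda>x. (tr (\<epsilon> k x) - \<mu>)^2)"
    proof (rule mult_right_mono)
      show "(b k / \<rho>)^2 \<le> 1" using bq[OF that] abs_square_le_1 by blast
    qed (simp add: integral_nonneg_AE)
    also have "\<dots> \<le> s0" using Etr2[OF that] var0 by simp
    finally show ?thesis .
  qed
  have indZ: "indep_vars (\<lambda>_. borel) Z K"
    unfolding Z_def by (rule indep_vars_compose2[OF ind, where Y="\<lambda>k y. (b k / \<rho>) * (tr y - \<mu>)"]) measurable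
  have indZ': "indep_vars (\<lambda>_. borel) (\<lambda>k x. - Z k x) K"
    by (rule indep_vars_compose2[OF indZ, where Y="\<lambda>k y. - y"]) measurable
  have c1: "prob {x\<in>space M. (\<Sum>k\<in>K. Z k x) \<ge> D} \<le> exp (- l * D + real (card K) * l^2 * s0)"
    by (rule chern[OF fin indZ, where B="2*\<tau>"]) (use Zb EZ EZ2 l in auto)
  have c2: "prob {x\<in>space M. (\<Sum>k\<in>K. - Z k x) \<ge> D} \<le> exp (- l * D + real (card K) * l^2 * s0)"
    by (rule chern[OF fin indZ', where B="2*\<tau>"]) (use Zb EZ EZ2 l in \<open>auto simp: prob_space\<close>)
  have sub: "{x\<in>space M. (\<forall>k\<in>K. \<bar>\<epsilon> k x\<bar> \<le> \<tau>) \<and> \<bar>\<Sum>k\<in>K. b k * \<epsilon> k x\<bar> > 2 * \<rho> * D}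
      \<subseteq> {x\<in>space M. (\<Sum>k\<in>K. Z k x) \<ge> D} \<union> {x\<in>space M. (\<Sum>k\<in>K. - Z k x) \<ge> D}"
  proof safe
    fix x assume x: "x \<in> space M" "\<forall>k\<in>K. \<bar>\<epsilon> k x\<bar> \<le> \<tau>" "\<bar>\<Sum>k\<in>K. b k * \<epsilon> k x\<bar> > 2 * \<rho> * D"
      and n: "\<not> D \<le> (\<Sum>k\<in>K. - Z k x)"
    have "\<rho> * (\<Sum>k\<in>K. Z k x) = (\<Sum>k\<in>K. b k * \<epsilon> k x) - \<mu> * (\<Sum>k\<in>K. b k)"
      unfolding Z_def sum_distrib_left sum_subtractf[symmetric] using x(2) \<rho>
      by (intro sum.cong refl) (auto simp: tr_def field_simps)
    moreover have "\<bar>\<mu> * (\<Sum>k\<in>K. b k)\<bar> \<le> \<rho> * D"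
    proof -
      have "\<bar>\<Sum>k\<in>K. b k\<bar> \<le> (\<Sum>k\<in>K. \<rho>)"
        using bb by (intro order.trans[OF sum_abs] sum_mono) auto
      then have "\<bar>\<Sum>k\<in>K. b k\<bar> \<le> real (card K) * \<rho>" by simp
      then have "\<bar>\<mu> * (\<Sum>k\<in>K. b k)\<bar> \<le> \<bar>\<mu>\<bar> * (real (card K) * \<rho>)"
        by (simp add: abs_mult mult_left_mono)
      also have "\<dots> = \<rho> * (real (card K) * \<bar>\<mu>\<bar>)" by simp
      also have "\<dots> \<le> \<rho> * D" using \<mu>D \<rho> unfolding \<mu>_def tr_def by (intro mult_left_mono) auto
      finally show ?thesis .
    qed
    ultimately have "\<rho> * \<bar>\<Sum>k\<in>K. Z k x\<bar> > \<rho> * D"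
    proof -
      assume e: "\<rho> * (\<Sum>k\<in>K. Z k x) = (\<Sum>k\<in>K. b k * \<epsilon> k x) - \<mu> * (\<Sum>k\<in>K. b k)"
        and c: "\<bar>\<mu> * (\<Sum>k\<in>K. b k)\<bar> \<le> \<rho> * D"
      have "\<rho> * \<bar>\<Sum>k\<in>K. Z k x\<bar> = \<bar>(\<Sum>k\<in>K. b k * \<epsilon> k x) - \<mu> * (\<Sum>k\<in>K. b k)\<bar>"
        using \<rho> e by (metis abs_mult abs_of_pos)
      moreover have "\<bar>(\<Sum>k\<in>K. b k * \<epsilon> k x)\<bar> - \<bar>\<mu> * (\<Sum>k\<in>K. b k)\<bar> \<le> \<bar>(\<Sum>k\<in>K. b k * \<epsilon> k x) - \<mu> * (\<Sum>k\<in>K. b k)\<bar>"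
        by (rule abs_triangle_ineq2)
      ultimately show ?thesis using c x(3) \<rho> by linarith
    qed
    then have "\<bar>\<Sum>k\<in>K. Z k x\<bar> > D" using \<rho> by simp
    moreover have "(\<Sum>k\<in>K. - Z k x) = - (\<Sum>k\<in>K. Z k x)" by (simp add: sum_negf)
    ultimately show "D \<le> (\<Sum>k\<in>K. Z k x)" using n by linarith
  qed
  have "prob {x\<in>space M. (\<forall>k\<in>K. \<bar>\<epsilon> k x\<bar> \<le> \<tau>) \<and> \<bar>\<Sum>k\<in>K. b k * \<epsilon> k x\<bar> > 2 * \<rho> * D}
      \<le> prob ({x\<in>space M. (\<Sum>k\<in>K. Z k x) \<ge> D} \<union> {x\<in>space M. (\<Sum>k\<in>K. - Z k x) \<ge> D})"
    by (rule finite_measure_mono[OF sub]) measurable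
  also have "\<dots> \<le> prob {x\<in>space M. (\<Sum>k\<in>K. Z k x) \<ge> D} + prob {x\<in>space M. (\<Sum>k\<in>K. - Z k x) \<ge> D}"
    by (rule measure_Un_le) measurable
  also have "\<dots> \<le> 2 * exp (- l * D + real (card K) * l^2 * s0)" using c1 c2 by simp
  finally show ?thesis unfolding s0_def .
qed

end


definition coefc :: "nat \<Rightarrow> nat \<Rightarrow> int \<Rightarrow> nat \<Rightarrow> nat \<times> nat \<Rightarrow> complex" where
  "coefc P Q l m k = complex_of_real (cellw P Q (fst k)) * cnj (cpsi l m (z1 Q (fst k)) (z2 P (snd k)))"

definition Xs :: "nat \<Rightarrow> nat \<Rightarrow> int \<Rightarrow> nat \<Rightarrow> (nat \<times> nat \<Rightarrow> real) \<Rightarrow> complex" where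
  "Xs P Q l m e = (\<Sum>k\<in>Kset P Q. coefc P Q l m k * complex_of_real (e k))"

definition Gs :: "nat \<Rightarrow> nat \<Rightarrow> nat \<Rightarrow> (nat \<times> nat \<Rightarrow> real) \<Rightarrow> real \<Rightarrow> real \<Rightarrow> complex" where
  "Gs P Q T e r \<theta> = (\<Sum>m=0..T. \<Sum>l\<in>{- int m..int m}.
      complex_of_real (sqrt (real m + 1)) * zphi l m r \<theta> * Xs P Q l m e)"

lemma finite_Kset [simp]: "finite (Kset P Q)"
  unfolding Kset_def by simp

lemma card_Kset [simp]: "card (Kset P Q) = P * Q"
  unfolding Kset_def by (simp add: card_cartesian_product)

lemma Rhat_split: "Rhat g P Q e l m = Rhat g P Q (\<lambda>_. 0) l m + Xs P Q l m e"
  unfolding Rhat_def Xs_def coefc_def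
  by (simp add: sum.distrib[symmetric] distrib_left)

lemma ghat_split: "ghat g P Q T e r \<theta> = ghat g P Q T (\<lambda>_. 0) r \<theta> + Gs P Q T e r \<theta>"
  unfolding ghat_def Gs_def
  by (subst Rhat_split) (simp add: sum.distrib[symmetric] distrib_left)

lemma zphi_bound:
  assumes "0 \<le> r" "r \<le> 1"
  shows "cmod (zphi l m r \<theta>) \<le> sqrt (real m + 1)"
proof (cases "inN l m")
  case True
  then have a: "nat \<bar>l\<bar> \<le> m" "even (m - nat \<bar>l\<bar>)" unfolding inN_def by auto
  have z: "\<bar>zernR m (nat \<bar>l\<bar>) r\<bar> \<le> 1" by (rule zernR_le1[OF a assms])
  have e: "\<i> * of_int l * complex_of_real \<theta> = \<i> * complex_of_real (of_int l * \<theta>)" by simp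
  have "cmod (zphi l m r \<theta>) = sqrt (real m + 1) * \<bar>zernR m (nat \<bar>l\<bar>) r\<bar>"
    unfolding zphi_def using True by (simp add: norm_mult e abs_mult)
  also have "\<dots> \<le> sqrt (real m + 1) * 1" using z by (intro mult_left_mono) auto
  finally show ?thesis by simp
next
  case False
  then show ?thesis unfolding zphi_def by simp
qed

lemma cpsi_bound:
  assumes "k1 < Q"
  shows "cmod (cpsi l m (z1 Q k1) \<phi>) \<le> real m + 1"
proof (cases "inN l m")
  case True
  have zb: "\<bar>z1 Q k1\<bar> \<le> 1" using z1_bounds[OF assms] by auto
  have e: "\<i> * of_int l * complex_of_real \<phi> = \<i> * complex_of_real (of_int l * \<phi>)" by simp
  have "cmod (cpsi l m (z1 Q k1) \<phi>) = \<bar>chebU m (z1 Q k1)\<bar>"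
    unfolding cpsi_def using True by (simp add: norm_mult e)
  also have "\<dots> \<le> real m + 1" by (rule chebU_bound[OF zb])
  finally show ?thesis .
next
  case False
  then show ?thesis unfolding cpsi_def by simp
qed

lemma coefc_bound:
  assumes "k \<in> Kset P Q" "0 < P"
  shows "\<bar>Re (coefc P Q l m k)\<bar> \<le> 2 * (real m + 1) / real (P * Q)"
    "\<bar>Im (coefc P Q l m k)\<bar> \<le> 2 * (real m + 1) / real (P * Q)"
proof -
  have k1: "fst k < Q" using assms(1) unfolding Kset_def by auto
  have Q0: "0 < Q" using k1 by simp
  have cw: "0 \<le> cellw P Q (fst k)" "cellw P Q (fst k) \<le> 4 / (pi * real P * real Q)"
    using cellw_bounds[OF k1 assms(2)] by auto
  have "cmod (coefc P Q l m k) = cellw P Q (fst k) * cmod (cpsi l m (z1 Q (fst k)) (z2 P (snd k)))"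
    unfolding coefc_def using cw by (simp add: norm_mult)
  also have "\<dots> \<le> (4 / (pi * real P * real Q)) * (real m + 1)"
    using cw cpsi_bound[OF k1] by (intro mult_mono) auto
  also have "\<dots> \<le> (2 / (real P * real Q)) * (real m + 1)"
  proof (intro mult_right_mono)
    have "4 / pi \<le> 2" using pi_gt3 by (simp add: divide_le_eq)
    then have "4 / pi / (real P * real Q) \<le> 2 / (real P * real Q)"
      using assms Q0 by (intro divide_right_mono) auto
    then show "4 / (pi * real P * real Q) \<le> 2 / (real P * real Q)" by (simp add: mult.assoc)
  qed auto
  also have "\<dots> = 2 * (real m + 1) / real (P * Q)" by simp
  finally have c: "cmod (coefc P Q l m k) \<le> 2 * (real m + 1) / real (P * Q)" .
  show "\<bar>Re (coefc P Q l m k)\<bar> \<le> 2 * (real m + 1) / real (P * Q)"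
    using abs_Re_le_cmod c by (rule order.trans)
  show "\<bar>Im (coefc P Q l m k)\<bar> \<le> 2 * (real m + 1) / real (P * Q)"
    using abs_Im_le_cmod c by (rule order.trans)
qed

lemma Re_Xs: "Re (Xs P Q l m e) = (\<Sum>k\<in>Kset P Q. Re (coefc P Q l m k) * e k)"
  unfolding Xs_def by (simp add: Re_sum)

lemma Im_Xs: "Im (Xs P Q l m e) = (\<Sum>k\<in>Kset P Q. Im (coefc P Q l m k) * e k)"
  unfolding Xs_def by (simp add: Im_sum)

lemma Gs_bound:
  assumes T: "1 \<le> T" and L: "0 \<le> L" and r: "0 \<le> r" "r \<le> 1"
    and X: "\<And>m l. m \<le> T \<Longrightarrow> l \<in> {- int m..int m} \<Longrightarrow>
        \<bar>Re (Xs P Q l m e)\<bar> \<le> (real m + 1) * L \<and> \<bar>Im (Xs P Q l m e)\<bar> \<le> (real m + 1) * L"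
  shows "cmod (Gs P Q T e r \<theta>) \<le> 48 * real T ^ 4 * L"
proof -
  have trm: "cmod (complex_of_real (sqrt (real m + 1)) * zphi l m r \<theta> * Xs P Q l m e) \<le> 2 * (real m + 1)^2 * L"
    if "m \<le> T" "l \<in> {- int m..int m}" for m l
  proof -
    have x: "cmod (Xs P Q l m e) \<le> 2 * (real m + 1) * L"
    proof -
      have "(2 * (real m + 1)) * L = (real m + 1) * L + (real m + 1) * L" by (simp add: algebra_simps)
      then show ?thesis using cmod_le[of "Xs P Q l m e"] X[OF that] by linarith
    qed
    have "cmod (complex_of_real (sqrt (real m + 1)) * zphi l m r \<theta> * Xs P Q l m e)
        = sqrt (real m + 1) * cmod (zphi l m r \<theta>) * cmod (Xs P Q l m e)"
      by (simp add: norm_mult)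
    also have "\<dots> \<le> sqrt (real m + 1) * sqrt (real m + 1) * (2 * (real m + 1) * L)"
      using zphi_bound[OF r] x by (intro mult_mono) auto
    also have "\<dots> = 2 * (real m + 1)^2 * L" by (simp add: power2_eq_square)
    finally show ?thesis .
  qed
  have "cmod (Gs P Q T e r \<theta>) \<le> (\<Sum>m=0..T. \<Sum>l\<in>{- int m..int m}.
      cmod (complex_of_real (sqrt (real m + 1)) * zphi l m r \<theta> * Xs P Q l m e))"
    unfolding Gs_def by (intro order.trans[OF norm_sum] sum_mono norm_sum)
  also have "\<dots> \<le> (\<Sum>m=0..T. \<Sum>l\<in>{- int m..int m}. 2 * (real m + 1)^2 * L)"
    using trm by (intro sum_mono) auto
  also have "\<dots> = (\<Sum>m=0..T. (2 * real m + 1) * (2 * (real m + 1)^2 * L))"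
    by (intro sum.cong refl) (simp add: algebra_simps)
  also have "\<dots> \<le> (\<Sum>m=0..T. (2 * real T + 1) * (2 * (real T + 1)^2 * L))"
    using L by (intro sum_mono mult_mono mult_left_mono power_mono) auto
  also have "\<dots> = (real T + 1) * (2 * real T + 1) * (2 * (real T + 1)^2 * L)" by simp
  also have "\<dots> \<le> (2 * real T) * (3 * real T) * (2 * (2 * real T)^2 * L)"
    using T L by (intro mult_mono mult_left_mono power_mono) auto
  also have "\<dots> = 48 * real T ^ 4 * L" by (simp add: power2_eq_square power4_eq_xxxx)
  finally show ?thesis .
qed

lemma Gs_integral:
  assumes "prob_space M"
    and int: "\<And>k. k \<in> Kset P Q \<Longrightarrow> integrable M (\<epsilon> k)"
    and mean: "\<And>k. k \<in> Kset P Q \<Longrightarrow> integral\<^sup>L M (\<epsilon> k) = 0"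
  shows "integrable M (\<lambda>\<omega>. Gs P Q T (\<lambda>k. \<epsilon> k \<omega>) r \<theta>)"
    "integral\<^sup>L M (\<lambda>\<omega>. Gs P Q T (\<lambda>k. \<epsilon> k \<omega>) r \<theta>) = 0"
proof -
  have iX: "integrable M (\<lambda>\<omega>. Xs P Q l m (\<lambda>k. \<epsilon> k \<omega>))" for l m
    unfolding Xs_def using int by (intro Bochner_Integration.integrable_sum integrable_mult_right integrable_of_real) auto
  have eX: "integral\<^sup>L M (\<lambda>\<omega>. Xs P Q l m (\<lambda>k. \<epsilon> k \<omega>)) = 0" for l m
    unfolding Xs_def using int mean
    by (subst Bochner_Integration.integral_sum) (auto intro!: integrable_mult_right integrable_of_real)
  show "integrable M (\<lambda>\<omega>. Gs P Q T (\<lambda>k. \<epsilon> k \<omega>) r \<theta>)"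
    unfolding Gs_def using iX by (intro Bochner_Integration.integrable_sum integrable_mult_right) auto
  show "integral\<^sup>L M (\<lambda>\<omega>. Gs P Q T (\<lambda>k. \<epsilon> k \<omega>) r \<theta>) = 0"
    unfolding Gs_def using iX eX
    by (simp add: Bochner_Integration.integral_sum Bochner_Integration.integrable_sum integrable_mult_right)
qed

lemma ghat_diff:
  assumes "prob_space M"
    and int: "\<And>k. k \<in> Kset P Q \<Longrightarrow> integrable M (\<epsilon> k)"
    and mean: "\<And>k. k \<in> Kset P Q \<Longrightarrow> integral\<^sup>L M (\<epsilon> k) = 0"
  shows "ghat g P Q T (\<lambda>k. \<epsilon> k \<omega>) r \<theta> - integral\<^sup>L M (\<lambda>\<omega>'. ghat g P Q T (\<lambda>k. \<epsilon> k \<omega>') r \<theta>)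
     = Gs P Q T (\<lambda>k. \<epsilon> k \<omega>) r \<theta>"
proof -
  interpret prob_space M by fact
  have "integral\<^sup>L M (\<lambda>\<omega>'. ghat g P Q T (\<lambda>k. \<epsilon> k \<omega>') r \<theta>)
     = integral\<^sup>L M (\<lambda>\<omega>'. ghat g P Q T (\<lambda>_. 0) r \<theta> + Gs P Q T (\<lambda>k. \<epsilon> k \<omega>') r \<theta>)"
    by (subst ghat_split) rule
  also have "\<dots> = ghat g P Q T (\<lambda>_. 0) r \<theta>"
    using Gs_integral[OF assms] by (simp add: prob_space)
  finally show ?thesis by (subst ghat_split) simp
qed


lemma pw_sq: "(3::real) < \<kappa> \<Longrightarrow> x^2 \<le> 1 + \<bar>x\<bar> powr \<kappa>"
proof (cases "\<bar>x\<bar> \<le> 1")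
  case True
  then have "x^2 \<le> 1" by (simp add: abs_square_le_1)
  then show ?thesis by (smt (verit) powr_ge_zero)
next
  case False
  assume k: "3 < \<kappa>"
  have "x^2 = \<bar>x\<bar> powr 2" using False by (simp add: powr_numeral)
  also have "\<dots> \<le> \<bar>x\<bar> powr \<kappa>" using False k by (intro powr_mono) auto
  finally show ?thesis by simp
qed

lemma pw_abs: "(3::real) < \<kappa> \<Longrightarrow> \<bar>x\<bar> \<le> 1 + \<bar>x\<bar> powr \<kappa>"
proof (cases "\<bar>x\<bar> \<le> 1")
  case True
  then show ?thesis by (smt (verit) powr_ge_zero)
next
  case False
  assume k: "3 < \<kappa>"
  have "\<bar>x\<bar> = \<bar>x\<bar> powr 1" using False by simp
  also have "\<dots> \<le> \<bar>x\<bar> powr \<kappa>" using False k by (intro powr_mono) auto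
  finally show ?thesis by simp
qed

lemma pw_tail:
  assumes "0 < \<tau>" "\<tau> < \<bar>x\<bar>" "(1::real) < \<kappa>"
  shows "\<bar>x\<bar> \<le> \<bar>x\<bar> powr \<kappa> * \<tau> powr (1 - \<kappa>)"
proof -
  have ax: "0 < \<bar>x\<bar>" using assms by simp
  have "\<bar>x\<bar> powr \<kappa> * \<tau> powr (1 - \<kappa>) = \<bar>x\<bar> * (\<bar>x\<bar> powr (\<kappa> - 1) / \<tau> powr (\<kappa> - 1))"
    using ax assms(1) by (simp add: powr_diff powr_minus field_simps)
  also have "\<dots> \<ge> \<bar>x\<bar> * 1"
  proof (intro mult_left_mono)
    have "\<tau> powr (\<kappa> - 1) \<le> \<bar>x\<bar> powr (\<kappa> - 1)"
      using assms by (intro powr_mono2) auto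
    then show "1 \<le> \<bar>x\<bar> powr (\<kappa> - 1) / \<tau> powr (\<kappa> - 1)" using assms(1) by simp
  qed simp
  finally show ?thesis by simp
qed

context prob_space
begin

lemma moments:
  fixes e0 :: "'a \<Rightarrow> real" and \<kappa> :: real
  assumes [measurable]: "e0 \<in> borel_measurable M" and k: "3 < \<kappa>"
    and ik: "integrable M (\<lambda>\<omega>. \<bar>e0 \<omega>\<bar> powr \<kappa>)"
  shows "integrable M (\<lambda>x. (e0 x)^2)" "integrable M e0"
proof -
  show "integrable M (\<lambda>x. (e0 x)^2)"
    by (rule Bochner_Integration.integrable_bound[where f="\<lambda>x. 1 + \<bar>e0 x\<bar> powr \<kappa>"])
       (use ik pw_sq[OF k] in \<open>auto intro!: AE_I2\<close>)
  show "integrable M e0"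
    by (rule Bochner_Integration.integrable_bound[where f="\<lambda>x. 1 + \<bar>e0 x\<bar> powr \<kappa>"])
       (use ik pw_abs[OF k] in \<open>auto intro!: AE_I2\<close>)
qed

lemma tail_prob:
  fixes e0 :: "'a \<Rightarrow> real" and \<kappa> \<tau> :: real
  assumes [measurable]: "e0 \<in> borel_measurable M" and k: "3 < \<kappa>"
    and ik: "integrable M (\<lambda>\<omega>. \<bar>e0 \<omega>\<bar> powr \<kappa>)" and \<tau>: "0 < \<tau>"
  shows "prob {x\<in>space M. \<tau> < \<bar>e0 x\<bar>} \<le> expectation (\<lambda>\<omega>. \<bar>e0 \<omega>\<bar> powr \<kappa>) / \<tau> powr \<kappa>"
proof -
  have "prob {x\<in>space M. \<tau> < \<bar>e0 x\<bar>} \<le> prob {x\<in>space M. \<tau> powr \<kappa> \<le> \<bar>e0 x\<bar> powr \<kappa>}"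
    by (rule finite_measure_mono) (use \<tau> k in \<open>auto intro!: powr_mono2\<close>)
  also have "\<dots> \<le> expectation (\<lambda>\<omega>. \<bar>e0 \<omega>\<bar> powr \<kappa>) / \<tau> powr \<kappa>"
    by (rule integral_Markov_inequality_measure[OF ik, where A="space M"]) (use \<tau> in auto)
  finally show ?thesis .
qed

lemma trunc_mean:
  fixes e0 :: "'a \<Rightarrow> real" and \<kappa> \<tau> :: real
  assumes [measurable]: "e0 \<in> borel_measurable M" and k: "3 < \<kappa>"
    and ik: "integrable M (\<lambda>\<omega>. \<bar>e0 \<omega>\<bar> powr \<kappa>)" and \<tau>: "0 < \<tau>"
    and m0: "expectation e0 = 0"
  shows "\<bar>expectation (\<lambda>x. if \<bar>e0 x\<bar> \<le> \<tau> then e0 x else 0)\<bar>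
      \<le> expectation (\<lambda>\<omega>. \<bar>e0 \<omega>\<bar> powr \<kappa>) * \<tau> powr (1 - \<kappa>)"
proof -
  have ie: "integrable M e0" using moments[OF assms(1-3)] by simp
  define h where "h x = (if \<bar>x\<bar> \<le> \<tau> then 0 else x)" for x :: real
  have hm[measurable]: "h \<in> borel_measurable borel" unfolding h_def by measurable
  have hb: "\<bar>h x\<bar> \<le> \<bar>x\<bar> powr \<kappa> * \<tau> powr (1 - \<kappa>)" for x
    unfolding h_def using pw_tail[OF \<tau> _, of x \<kappa>] k by auto
  have ih: "integrable M (\<lambda>x. h (e0 x))"
    by (rule Bochner_Integration.integrable_bound[where f="\<lambda>x. \<bar>e0 x\<bar> powr \<kappa> * \<tau> powr (1 - \<kappa>)"])
       (use ik hb in \<open>auto intro!: AE_I2\<close>)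
  have "expectation (\<lambda>x. if \<bar>e0 x\<bar> \<le> \<tau> then e0 x else 0) = expectation (\<lambda>x. e0 x - h (e0 x))"
    by (rule Bochner_Integration.integral_cong[OF refl]) (simp add: h_def)
  also have "\<dots> = - expectation (\<lambda>x. h (e0 x))"
    using ie ih m0 by simp
  finally have "\<bar>expectation (\<lambda>x. if \<bar>e0 x\<bar> \<le> \<tau> then e0 x else 0)\<bar> = \<bar>expectation (\<lambda>x. h (e0 x))\<bar>"
    by simp
  also have "\<dots> \<le> expectation (\<lambda>x. \<bar>h (e0 x)\<bar>)"
    using integral_norm_bound[of M "\<lambda>x. h (e0 x)"] by simp
  also have "\<dots> \<le> expectation (\<lambda>x. \<bar>e0 x\<bar> powr \<kappa> * \<tau> powr (1 - \<kappa>))"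
    by (rule integral_mono) (use ih ik hb in auto)
  also have "\<dots> = expectation (\<lambda>\<omega>. \<bar>e0 \<omega>\<bar> powr \<kappa>) * \<tau> powr (1 - \<kappa>)"
    by simp
  finally show ?thesis .
qed

end

lemma asym_A1:
  fixes \<gamma> :: real
  assumes "0 < \<gamma>"
  shows "eventually (\<lambda>x. 2 * sqrt (ln x) * x powr (- \<gamma>) \<le> 1) at_top"
proof -
  have "eventually (\<lambda>x. 1 \<le> x \<and> (4 / \<gamma>) powr (1 / \<gamma>) \<le> x) at_top"
    by (intro eventually_conj eventually_ge_at_top)
  then show ?thesis
  proof (rule eventually_mono)
    fix x :: real assume x: "1 \<le> x \<and> (4 / \<gamma>) powr (1 / \<gamma>) \<le> x"
    then have x1: "1 \<le> x" and x0: "0 < x" by auto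
    have "4 / \<gamma> = ((4 / \<gamma>) powr (1 / \<gamma>)) powr \<gamma>" using assms by (simp add: powr_powr)
    also have "\<dots> \<le> x powr \<gamma>" using x assms by (intro powr_mono2) auto
    finally have xg: "4 / \<gamma> \<le> x powr \<gamma>" .
    have "ln x \<le> x powr \<gamma> / \<gamma>" by (rule ln_powr_bound[OF x1 assms])
    also have "\<dots> = (4 / \<gamma>) * x powr \<gamma> / 4" by simp
    also have "\<dots> \<le> x powr \<gamma> * x powr \<gamma> / 4"
      using xg by (intro divide_right_mono mult_right_mono) auto
    also have "\<dots> = (x powr \<gamma> / 2)^2" by (simp add: power2_eq_square)
    finally have "sqrt (ln x) \<le> sqrt ((x powr \<gamma> / 2)^2)"
      by (rule real_sqrt_le_mono)
    also have "sqrt ((x powr \<gamma> / 2)^2) = x powr \<gamma> / 2" by simp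
    finally have "sqrt (ln x) \<le> x powr \<gamma> / 2" .
    then have "2 * sqrt (ln x) \<le> x powr \<gamma>" by simp
    then have "2 * sqrt (ln x) * x powr (- \<gamma>) \<le> x powr \<gamma> * x powr (- \<gamma>)"
      by (intro mult_right_mono) auto
    also have "\<dots> = 1" using x0 by (simp add: powr_add[symmetric])
    finally show "2 * sqrt (ln x) * x powr (- \<gamma>) \<le> 1" .
  qed
qed

lemma asym_A2:
  fixes c K0 :: real
  assumes "0 < K0"
  shows "eventually (\<lambda>x. c \<le> K0 * sqrt (x * ln x)) at_top"
proof -
  have "eventually (\<lambda>x. exp 1 \<le> x \<and> (c / K0)^2 \<le> x) at_top"
    by (intro eventually_conj eventually_ge_at_top)
  then show ?thesis
  proof (rule eventually_mono)
    fix x :: real assume x: "exp 1 \<le> x \<and> (c / K0)^2 \<le> x"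
    then have x0: "0 < x" using exp_gt_zero[of 1] by linarith
    have "1 \<le> ln x" using x x0 by (metis ln_exp ln_le_cancel_iff exp_gt_zero)
    then have "x \<le> x * ln x" using x0 by simp
    then have "sqrt x \<le> sqrt (x * ln x)" by simp
    moreover have "c / K0 \<le> sqrt x" using x by (simp add: real_le_rsqrt)
    ultimately have "c / K0 \<le> sqrt (x * ln x)" by linarith
    then show "c \<le> K0 * sqrt (x * ln x)" using assms by (simp add: field_simps)
  qed
qed


definition Idx :: "nat \<Rightarrow> ((nat \<times> int) \<times> nat) set" where
  "Idx T = (SIGMA m:{..T}. {- int m..int m}) \<times> {0, 1}"

definition bco :: "nat \<Rightarrow> nat \<Rightarrow> nat \<Rightarrow> int \<Rightarrow> nat \<Rightarrow> nat \<times> nat \<Rightarrow> real" where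
  "bco P Q j l m k = (if j = 0 then Re (coefc P Q l m k) else Im (coefc P Q l m k))"

definition Fset :: "'a measure \<Rightarrow> (nat \<times> nat \<Rightarrow> 'a \<Rightarrow> real) \<Rightarrow> nat \<Rightarrow> nat \<Rightarrow> real \<Rightarrow> real \<Rightarrow> (nat \<times> int) \<times> nat \<Rightarrow> 'a set" where
  "Fset M \<epsilon> P Q \<tau> D i = {\<omega>\<in>space M. (\<forall>k\<in>Kset P Q. \<bar>\<epsilon> k \<omega>\<bar> \<le> \<tau>) \<and>
      \<bar>\<Sum>k\<in>Kset P Q. bco P Q (snd i) (snd (fst i)) (fst (fst i)) k * \<epsilon> k \<omega>\<bar>
        > 2 * (2 * (real (fst (fst i)) + 1) / real (P * Q)) * D}"

definition badset :: "'a measure \<Rightarrow> (nat \<times> nat \<Rightarrow> 'a \<Rightarrow> real) \<Rightarrow> nat \<Rightarrow> nat \<Rightarrow> nat \<Rightarrow> real \<Rightarrow> real \<Rightarrow> 'a set" where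
  "badset M \<epsilon> P Q T \<tau> D = (\<Union>k\<in>Kset P Q. {\<omega>\<in>space M. \<tau> < \<bar>\<epsilon> k \<omega>\<bar>}) \<union> (\<Union>i\<in>Idx T. Fset M \<epsilon> P Q \<tau> D i)"

lemma finite_Idx [simp]: "finite (Idx T)"
  unfolding Idx_def by auto

lemma card_Idx: "real (card (Idx T)) \<le> 2 * (real T + 1) * (2 * real T + 1)"
proof -
  have "card (Idx T) = 2 * (\<Sum>m\<le>T. card {- int m..int m})"
    unfolding Idx_def by (simp add: card_cartesian_product)
  also have "(\<Sum>m\<le>T. card {- int m..int m}) = (\<Sum>m\<le>T. 2 * m + 1)"
    by (intro sum.cong refl) (simp add: nat_add_distrib)
  finally have c: "card (Idx T) = 2 * (\<Sum>m\<le>T. 2 * m + 1)" .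
  have "real (\<Sum>m\<le>T. 2 * m + 1) \<le> (\<Sum>m\<le>T. 2 * real T + 1)"
    unfolding of_nat_sum by (intro sum_mono) auto
  also have "\<dots> = (real T + 1) * (2 * real T + 1)" by simp
  finally have S: "real (\<Sum>m\<le>T. 2 * m + 1) \<le> (real T + 1) * (2 * real T + 1)" .
  have "real (card (Idx T)) = 2 * real (\<Sum>m\<le>T. 2 * m + 1)" unfolding c by (simp only: of_nat_mult of_nat_numeral)
  also have "\<dots> \<le> 2 * ((real T + 1) * (2 * real T + 1))" using S by (intro mult_left_mono) auto
  also have "\<dots> = 2 * (real T + 1) * (2 * real T + 1)" by (rule mult.assoc[symmetric])
  finally show ?thesis .
qed

lemma badset_sets:
  assumes [measurable]: "\<And>k. \<epsilon> k \<in> borel_measurable M"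
  shows "badset M \<epsilon> P Q T \<tau> D \<in> sets M"
proof -
  have "Fset M \<epsilon> P Q \<tau> D i \<in> sets M" for i
    unfolding Fset_def by measurable
  then show ?thesis unfolding badset_def by (intro sets.Un sets.finite_UN) auto
qed

lemma badset_good:
  assumes "\<omega> \<in> space M - badset M \<epsilon> P Q T \<tau> D" "m \<le> T" "l \<in> {- int m..int m}"
  shows "\<bar>Re (Xs P Q l m (\<lambda>k. \<epsilon> k \<omega>))\<bar> \<le> 2 * (2 * (real m + 1) / real (P * Q)) * D"
    "\<bar>Im (Xs P Q l m (\<lambda>k. \<epsilon> k \<omega>))\<bar> \<le> 2 * (2 * (real m + 1) / real (P * Q)) * D"
proof -
  have small: "\<forall>k\<in>Kset P Q. \<bar>\<epsilon> k \<omega>\<bar> \<le> \<tau>" using assms(1) unfolding badset_def by auto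
  have i0: "((m, l), 0) \<in> Idx T" and i1: "((m, l), 1) \<in> Idx T" using assms(2,3) unfolding Idx_def by auto
  have "\<omega> \<notin> Fset M \<epsilon> P Q \<tau> D ((m, l), 0)" using assms(1) i0 unfolding badset_def by auto
  then show "\<bar>Re (Xs P Q l m (\<lambda>k. \<epsilon> k \<omega>))\<bar> \<le> 2 * (2 * (real m + 1) / real (P * Q)) * D"
    using assms(1) small unfolding Fset_def Re_Xs bco_def by auto
  have "\<omega> \<notin> Fset M \<epsilon> P Q \<tau> D ((m, l), 1)" using assms(1) i1 unfolding badset_def by auto
  then show "\<bar>Im (Xs P Q l m (\<lambda>k. \<epsilon> k \<omega>))\<bar> \<le> 2 * (2 * (real m + 1) / real (P * Q)) * D"
    using assms(1) small unfolding Fset_def Im_Xs bco_def by auto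
qed

context prob_space
begin

lemma badset_bound:
  fixes \<epsilon> :: "nat \<times> nat \<Rightarrow> 'a \<Rightarrow> real" and e0 :: "'a \<Rightarrow> real" and \<kappa> \<tau> lam D :: real
  assumes [measurable]: "e0 \<in> borel_measurable M" and k: "3 < \<kappa>"
    and ik: "integrable M (\<lambda>\<omega>. \<bar>e0 \<omega>\<bar> powr \<kappa>)" and m0: "expectation e0 = 0"
    and P: "0 < P" and Q: "0 < Q" and ind: "indep_vars (\<lambda>_. borel) \<epsilon> (Kset P Q)"
    and em[measurable]: "\<And>k. \<epsilon> k \<in> borel_measurable M"
    and dis: "\<And>k. k \<in> Kset P Q \<Longrightarrow> distr M borel (\<epsilon> k) = distr M borel e0"
    and \<tau>: "0 < \<tau>" and lam: "0 < lam" "2 * lam * \<tau> \<le> 1"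
    and \<mu>D: "real (P * Q) * (expectation (\<lambda>\<omega>. \<bar>e0 \<omega>\<bar> powr \<kappa>) * \<tau> powr (1 - \<kappa>)) \<le> D"
  shows "measure M (badset M \<epsilon> P Q T \<tau> D) \<le>
     real (P * Q) * (expectation (\<lambda>\<omega>. \<bar>e0 \<omega>\<bar> powr \<kappa>) / \<tau> powr \<kappa>)
     + real (card (Idx T)) * (2 * exp (- lam * D + real (P * Q) * lam^2 * expectation (\<lambda>x. (e0 x)^2)))"
proof -
  have int2: "integrable M (\<lambda>x. (e0 x)^2)" using moments[OF assms(1-3)] by simp
  have A: "measure M (\<Union>k\<in>Kset P Q. {\<omega>\<in>space M. \<tau> < \<bar>\<epsilon> k \<omega>\<bar>})
      \<le> real (P * Q) * (expectation (\<lambda>\<omega>. \<bar>e0 \<omega>\<bar> powr \<kappa>) / \<tau> powr \<kappa>)"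
  proof -
    have "measure M (\<Union>k\<in>Kset P Q. {\<omega>\<in>space M. \<tau> < \<bar>\<epsilon> k \<omega>\<bar>}) \<le> (\<Sum>k\<in>Kset P Q. prob {\<omega>\<in>space M. \<tau> < \<bar>\<epsilon> k \<omega>\<bar>})"
      by (rule measure_UNION_le) auto
    also have "\<dots> = (\<Sum>k\<in>Kset P Q. prob {\<omega>\<in>space M. \<tau> < \<bar>e0 \<omega>\<bar>})"
    proof (rule sum.cong[OF refl])
      fix k assume "k \<in> Kset P Q"
      have "prob {\<omega>\<in>space M. \<epsilon> k \<omega> \<in> {y. \<tau> < \<bar>y\<bar>}} = prob {\<omega>\<in>space M. e0 \<omega> \<in> {y. \<tau> < \<bar>y\<bar>}}"
        by (rule distr_prob_eq) (use dis[OF \<open>k \<in> Kset P Q\<close>] in auto)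
      then show "prob {\<omega>\<in>space M. \<tau> < \<bar>\<epsilon> k \<omega>\<bar>} = prob {\<omega>\<in>space M. \<tau> < \<bar>e0 \<omega>\<bar>}" by simp
    qed
    also have "\<dots> \<le> (\<Sum>k\<in>Kset P Q. expectation (\<lambda>\<omega>. \<bar>e0 \<omega>\<bar> powr \<kappa>) / \<tau> powr \<kappa>)"
      by (intro sum_mono tail_prob[OF assms(1-3) \<tau>])
    also have "\<dots> = real (P * Q) * (expectation (\<lambda>\<omega>. \<bar>e0 \<omega>\<bar> powr \<kappa>) / \<tau> powr \<kappa>)" by simp
    finally show ?thesis .
  qed
  have Fb: "measure M (Fset M \<epsilon> P Q \<tau> D i) \<le> 2 * exp (- lam * D + real (P * Q) * lam^2 * expectation (\<lambda>x. (e0 x)^2))"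
    if i: "i \<in> Idx T" for i
  proof -
    obtain m l j where ie: "i = ((m, l), j)" by (metis prod.collapse)
    define \<rho> where "\<rho> = 2 * (real m + 1) / real (P * Q)"
    have \<rho>: "0 < \<rho>" unfolding \<rho>_def using P Q by simp
    have bb: "\<bar>bco P Q j l m k\<bar> \<le> \<rho>" if "k \<in> Kset P Q" for k
      unfolding bco_def \<rho>_def using coefc_bound[OF that P] by auto
    have mu: "real (card (Kset P Q)) * \<bar>expectation (\<lambda>x. if \<bar>e0 x\<bar> \<le> \<tau> then e0 x else 0)\<bar> \<le> D"
    proof -
      have "real (card (Kset P Q)) * \<bar>expectation (\<lambda>x. if \<bar>e0 x\<bar> \<le> \<tau> then e0 x else 0)\<bar>
          \<le> real (P * Q) * (expectation (\<lambda>\<omega>. \<bar>e0 \<omega>\<bar> powr \<kappa>) * \<tau> powr (1 - \<kappa>))"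
        unfolding card_Kset using trunc_mean[OF assms(1-3) \<tau> m0] by (intro mult_left_mono) auto
      then show ?thesis using \<mu>D by linarith
    qed
    have "measure M (Fset M \<epsilon> P Q \<tau> D i) = prob {x\<in>space M. (\<forall>k\<in>Kset P Q. \<bar>\<epsilon> k x\<bar> \<le> \<tau>) \<and>
        \<bar>\<Sum>k\<in>Kset P Q. bco P Q j l m k * \<epsilon> k x\<bar> > 2 * \<rho> * D}"
      unfolding Fset_def ie \<rho>_def by simp
    also have "\<dots> \<le> 2 * exp (- lam * D + real (card (Kset P Q)) * lam^2 * expectation (\<lambda>x. (e0 x)^2))"
      by (rule tail_bound[OF finite_Kset ind em assms(1) dis int2 \<tau> bb \<rho> lam mu])
    finally show ?thesis by simp
  qed
  have "measure M (badset M \<epsilon> P Q T \<tau> D) \<le> measure M (\<Union>k\<in>Kset P Q. {\<omega>\<in>space M. \<tau> < \<bar>\<epsilon> k \<omega>\<bar>})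
      + measure M (\<Union>i\<in>Idx T. Fset M \<epsilon> P Q \<tau> D i)"
    unfolding badset_def
  proof (rule measure_Un_le)
    show "(\<Union>i\<in>Idx T. Fset M \<epsilon> P Q \<tau> D i) \<in> sets M"
      using badset_sets[OF em] unfolding Fset_def by (intro sets.finite_UN) measurable
  qed measurable
  also have "measure M (\<Union>i\<in>Idx T. Fset M \<epsilon> P Q \<tau> D i) \<le> (\<Sum>i\<in>Idx T. measure M (Fset M \<epsilon> P Q \<tau> D i))"
    by (rule measure_UNION_le) (auto simp: Fset_def)
  also have "\<dots> \<le> (\<Sum>i\<in>Idx T. 2 * exp (- lam * D + real (P * Q) * lam^2 * expectation (\<lambda>x. (e0 x)^2)))"
    by (intro sum_mono Fb)
  also have "\<dots> = real (card (Idx T)) * (2 * exp (- lam * D + real (P * Q) * lam^2 * expectation (\<lambda>x. (e0 x)^2)))"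
    by simp
  finally show ?thesis using A by linarith
qed

end


lemma ghat_cong:
  assumes "\<And>k. k \<in> Kset P Q \<Longrightarrow> e k = e' k"
  shows "ghat g P Q T e r \<theta> = ghat g P Q T e' r \<theta>"
proof -
  have "Rhat g P Q e l m = Rhat g P Q e' l m" for l m
    unfolding Rhat_def using assms by (intro sum.cong refl) auto
  then show ?thesis unfolding ghat_def by simp
qed

lemma Xs_cong:
  assumes "\<And>k. k \<in> Kset P Q \<Longrightarrow> e k = e' k"
  shows "Xs P Q l m e = Xs P Q l m e'"
  unfolding Xs_def using assms by (intro sum.cong refl) auto

lemma kappa_facts:
  fixes \<kappa> :: real assumes k3: "3 < \<kappa>"
  shows "(\<kappa> + 3) / (4 * \<kappa>) - 1/2 = - ((\<kappa> - 3) / (4 * \<kappa>))"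
    "0 < (\<kappa> - 3) / (4 * \<kappa>)" "0 < (\<kappa> + 3) / (4 * \<kappa>)"
    "1 - (\<kappa> + 3) / (4 * \<kappa>) * \<kappa> = - ((\<kappa> - 1) / 4)"
    "1 + (\<kappa> + 3) / (4 * \<kappa>) * (1 - \<kappa>) \<le> 0"
    "1/2 < (\<kappa> - 1) / 4"
proof -
  show "(\<kappa> + 3) / (4 * \<kappa>) - 1/2 = - ((\<kappa> - 3) / (4 * \<kappa>))" using k3 by (simp add: field_simps)
  show "0 < (\<kappa> - 3) / (4 * \<kappa>)" using k3 by simp
  show "0 < (\<kappa> + 3) / (4 * \<kappa>)" using k3 by simp
  show "1 - (\<kappa> + 3) / (4 * \<kappa>) * \<kappa> = - ((\<kappa> - 1) / 4)" using k3 by (simp add: field_simps)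
  show "1/2 < (\<kappa> - 1) / 4" using k3 by simp
  have "0 < (\<kappa> - 3) * (\<kappa> + 1)" using k3 by simp
  then have "4 * \<kappa> + (\<kappa> + 3) * (1 - \<kappa>) \<le> 0" by (simp add: algebra_simps)
  then show "1 + (\<kappa> + 3) / (4 * \<kappa>) * (1 - \<kappa>) \<le> 0" using k3 by (simp add: field_simps)
qed

theorem lemma3p2:
  fixes M :: "'a measure" and p :: "nat \<Rightarrow> nat" and t :: "nat \<Rightarrow> nat"
    and g :: "real \<times> real \<Rightarrow> real"
    and eps :: "nat \<Rightarrow> nat \<times> nat \<Rightarrow> 'a \<Rightarrow> real" and e0 :: "'a \<Rightarrow> real"
    and C1 C2 \<kappa> :: real
  assumes "prob_space M"
    and "C1 > 0" and "C2 > 0"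
    and "\<forall>q\<ge>1. C1 * real q \<le> real (p q) \<and> real (p q) \<le> C2 * real q"
    and "e0 \<in> borel_measurable M"
    and "integral\<^sup>L M e0 = 0"
    and "\<kappa> > 3" and "integrable M (\<lambda>\<omega>. \<bar>e0 \<omega>\<bar> powr \<kappa>)"
    and "\<forall>q. prob_space.indep_vars M (\<lambda>_. borel) (eps q) (Kset (p q) q)"
    and "\<forall>q. \<forall>k\<in>Kset (p q) q. distr M borel (eps q k) = distr M borel e0"
    and "(\<lambda>n. real (t n) / sqrt (real n)) \<in> O(\<lambda>_. 1)"
    and "\<forall>n. 1 \<le> t n"
  shows "AE \<omega> in M.
    (\<lambda>q. SUP z\<in>{0..1} \<times> {0..2*pi}.
        cmod (ghat g (p q) q (t (p q * q)) (\<lambda>k. eps q k \<omega>) (fst z) (snd z)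
          - integral\<^sup>L M (\<lambda>\<omega>'. ghat g (p q) q (t (p q * q)) (\<lambda>k. eps q k \<omega>') (fst z) (snd z))))
    \<in> O(\<lambda>q. real (t (p q * q)) ^ 4 * sqrt (ln (real (p q * q))) / sqrt (real (p q * q)))"

proof -
  interpret prob_space M by (rule assms(1))
  note e0m[measurable] = assms(5)
  have k3: "3 < \<kappa>" using assms(7) .
  have ik: "integrable M (\<lambda>\<omega>. \<bar>e0 \<omega>\<bar> powr \<kappa>)" using assms(8) .
  have m0: "expectation e0 = 0" using assms(6) .
  have int2: "integrable M (\<lambda>x. (e0 x)^2)" and ie0: "integrable M e0"
    using moments[OF e0m k3 ik] by auto
  define s0 where "s0 = expectation (\<lambda>x. (e0 x)^2)"
  define Mk where "Mk = expectation (\<lambda>\<omega>. \<bar>e0 \<omega>\<bar> powr \<kappa>)"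
  have Mk0: "0 \<le> Mk" unfolding Mk_def by (simp add: integral_nonneg_AE)
  define K0 where "K0 = \<bar>s0\<bar> + 4"
  have K0: "0 < K0" "s0 + 4 \<le> K0" unfolding K0_def by auto
  define \<alpha> where "\<alpha> = (\<kappa> + 3) / (4 * \<kappa>)"
  define \<gamma> where "\<gamma> = (\<kappa> - 3) / (4 * \<kappa>)"
  define \<beta> where "\<beta> = (\<kappa> - 1) / 4"
  note kf = kappa_facts[OF k3, folded \<alpha>_def \<gamma>_def \<beta>_def]
  define n where "n q = p q * q" for q
  define T where "T q = t (n q)" for q
  define E where "E q k \<omega> = (if k \<in> Kset (p q) q then eps q k \<omega> else 0)" for q k \<omega>
  define \<tau> where "\<tau> q = real (n q) powr \<alpha>" for q
  define lam where "lam q = sqrt (ln (real (n q)) / real (n q))" for q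
  define D where "D q = K0 * sqrt (real (n q) * ln (real (n q)))" for q
  define B where "B q = badset M (E q) (p q) q (T q) (\<tau> q) (D q)" for q
  have epsm: "k \<in> Kset (p q) q \<Longrightarrow> eps q k \<in> borel_measurable M" for q k
    using assms(9) unfolding indep_vars_def by auto
  have Em[measurable]: "E q k \<in> borel_measurable M" for q k
    unfolding E_def using epsm by (cases "k \<in> Kset (p q) q") auto
  have EK: "k \<in> Kset (p q) q \<Longrightarrow> E q k = eps q k" for q k unfolding E_def by (simp add: fun_eq_iff)
  have indE: "indep_vars (\<lambda>_. borel) (E q) (Kset (p q) q)" for q
    using assms(9) indep_vars_cong[of "Kset (p q) q" "Kset (p q) q" "eps q" "E q" "\<lambda>_. borel" "\<lambda>_. borel"] EK by auto
  have disE: "k \<in> Kset (p q) q \<Longrightarrow> distr M borel (E q k) = distr M borel e0" for q k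
    using assms(10) EK by auto
  have intE: "integrable M (eps q k)" if "k \<in> Kset (p q) q" for q k
  proof -
    have "integrable M (\<lambda>x. (\<lambda>y. y) (eps q k x)) \<longleftrightarrow> integrable M (\<lambda>x. (\<lambda>y. y) (e0 x))"
      by (rule distr_integrable_eq) (use epsm[OF that] assms(10) that in auto)
    then show ?thesis using ie0 by simp
  qed
  have meanE: "expectation (eps q k) = 0" if "k \<in> Kset (p q) q" for q k
  proof -
    have "expectation (\<lambda>x. (\<lambda>y. y) (eps q k x)) = expectation (\<lambda>x. (\<lambda>y. y) (e0 x))"
      by (rule distr_integral_eq) (use epsm[OF that] assms(10) that in auto)
    then show ?thesis using m0 by simp
  qed
  have pq: "0 < p q" if "1 \<le> q" for q
  proof -
    have "0 < C1 * real q" using assms(2) that by simp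
    also have "\<dots> \<le> real (p q)" using assms(4) that by auto
    finally show ?thesis by simp
  qed
  have nq: "real q \<le> real (n q)" if "1 \<le> q" for q
  proof -
    have "q \<le> p q * q" using pq[OF that] by simp
    then show ?thesis unfolding n_def by (simp only: of_nat_le_iff)
  qed
  have nC1: "C1 * (real q)^2 \<le> real (n q)" if "1 \<le> q" for q
  proof -
    have "C1 * (real q)^2 = (C1 * real q) * real q" by (simp add: power2_eq_square)
    also have "\<dots> \<le> real (p q) * real q" using assms(4) that by (intro mult_right_mono) auto
    finally show ?thesis unfolding n_def by simp
  qed
  have ev1q: "eventually (\<lambda>q. 1 \<le> q) sequentially" by (rule eventually_ge_at_top)
  have nlim: "filterlim (\<lambda>q. real (n q)) at_top sequentially"
  proof (rule filterlim_at_top_mono[OF filterlim_real_sequentially])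
    show "eventually (\<lambda>q. real q \<le> real (n q)) sequentially"
      using ev1q by (rule eventually_mono) (rule nq)
  qed
  have nlim_nat: "filterlim n at_top sequentially"
  proof (rule filterlim_at_top_mono[OF filterlim_ident])
    have "q \<le> n q" if "1 \<le> q" for q using nq[OF that] by simp
    then show "eventually (\<lambda>q. q \<le> n q) sequentially"
      using ev1q by (rule eventually_mono[rotated])
  qed
  obtain Ct where Ct: "Ct > 0" "eventually (\<lambda>N. norm (real (t N) / sqrt (real N)) \<le> Ct * norm (1::real)) sequentially"
    using assms(11) by (elim landau_o.bigE)
  have evT: "eventually (\<lambda>q. real (T q) \<le> Ct * sqrt (real (n q))) sequentially"
  proof -
    have "eventually (\<lambda>q. norm (real (t (n q)) / sqrt (real (n q))) \<le> Ct * norm (1::real)) sequentially"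
      by (rule eventually_compose_filterlim[OF Ct(2) nlim_nat])
    then show ?thesis using ev1q
    proof (eventually_elim)
      case (elim q)
      have "0 < real (n q)" using nq[OF elim(2)] elim(2) by linarith
      then show ?case using elim(1) unfolding T_def by (simp add: divide_le_eq)
    qed
  qed
  have evx: "eventually (\<lambda>x. 3 \<le> x \<and> 2 * sqrt (ln x) * x powr (- \<gamma>) \<le> 1 \<and> Mk \<le> K0 * sqrt (x * ln x)) at_top"
    by (intro eventually_conj eventually_ge_at_top asym_A1 asym_A2 kf(2) K0(1))
  have evn: "eventually (\<lambda>q. 3 \<le> real (n q) \<and> 2 * sqrt (ln (real (n q))) * real (n q) powr (- \<gamma>) \<le> 1
      \<and> Mk \<le> K0 * sqrt (real (n q) * ln (real (n q)))) sequentially"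
    by (rule eventually_compose_filterlim[OF evx nlim])
  have lamtau: "2 * lam q * \<tau> q = 2 * sqrt (ln (real (n q))) * real (n q) powr (- \<gamma>)" if "3 \<le> real (n q)" for q
  proof -
    define x where "x = real (n q)"
    have x: "0 < x" using that unfolding x_def by simp
    have "lam q * \<tau> q = sqrt (ln x) / x powr (1/2) * x powr \<alpha>"
      unfolding lam_def \<tau>_def x_def[symmetric] using x by (simp add: real_sqrt_divide powr_half_sqrt)
    also have "\<dots> = sqrt (ln x) * x powr (\<alpha> - 1/2)"
      using x by (simp add: powr_diff)
    also have "\<alpha> - 1/2 = - \<gamma>" using kf(1) .
    finally show ?thesis unfolding x_def by simp
  qed
  define u where "u q = Mk * C1 powr (- \<beta>) * real q powr (- 2 * \<beta>) + 24 * Ct^2 * C1 powr (- 3) * real q powr (- 6)" for q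
  have sum_u: "summable u"
  proof -
    have s1: "summable (\<lambda>q. real q powr (- 2 * \<beta>))" by (subst summable_real_powr_iff) (use kf(6) in simp)
    have s2: "summable (\<lambda>q. real q powr (- 6))" by (subst summable_real_powr_iff) simp
    show ?thesis unfolding u_def
      by (intro summable_add summable_mult s1 s2)
  qed
  have Bsets: "B q \<in> sets M" for q unfolding B_def by (rule badset_sets) (rule Em)
  have pw: "(C1 * (real q)^2) powr a = C1 powr a * real q powr (2 * a)" if "1 \<le> q" for q a
  proof -
    have e: "(real q)^2 = real q powr 2" using that by (simp add: powr_numeral)
    have "(C1 * (real q)^2) powr a = C1 powr a * ((real q)^2) powr a" by (rule powr_mult)
    also have "((real q)^2) powr a = (real q powr 2) powr a" unfolding e ..
    also have "\<dots> = real q powr (2 * a)" by (rule powr_powr)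
    finally show ?thesis .
  qed
  have evB: "eventually (\<lambda>q. norm (measure M (B q)) \<le> u q) sequentially"
    using evn evT ev1q
  proof eventually_elim
    case (elim q)
    define x where "x = real (n q)"
    have x3: "3 \<le> x" and A1: "2 * sqrt (ln x) * x powr (- \<gamma>) \<le> 1" and A2: "Mk \<le> D q"
      using elim(1) unfolding x_def D_def by auto
    have x0: "0 < x" using x3 by simp
    have lnx: "0 < ln x" using x3 by simp
    have Tq: "real (T q) \<le> Ct * sqrt x" using elim(2) unfolding x_def .
    have q1: "1 \<le> q" using elim(3) .
    have P: "0 < p q" by (rule pq[OF q1])
    have Q: "0 < q" using q1 by simp
    have nPQ: "real (p q * q) = x" unfolding x_def n_def ..
    have tau0: "0 < \<tau> q" unfolding \<tau>_def using x0 x_def by simp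
    have lam0: "0 < lam q" unfolding lam_def x_def[symmetric] using x0 lnx by simp
    have lam2: "2 * lam q * \<tau> q \<le> 1" using lamtau[of q] x3 A1 unfolding x_def by simp
    have muD: "real (p q * q) * (expectation (\<lambda>\<omega>. \<bar>e0 \<omega>\<bar> powr \<kappa>) * \<tau> q powr (1 - \<kappa>)) \<le> D q"
    proof -
      have "\<tau> q powr (1 - \<kappa>) = x powr (\<alpha> * (1 - \<kappa>))" unfolding \<tau>_def x_def[symmetric] by (rule powr_powr)
      then have "x * \<tau> q powr (1 - \<kappa>) = x powr (1 + \<alpha> * (1 - \<kappa>))"
        using x0 by (simp add: powr_add)
      also have "\<dots> \<le> x powr 0" using kf(5) x3 by (intro powr_mono) auto
      also have "\<dots> = 1" using x0 by simp
      finally have h: "x * \<tau> q powr (1 - \<kappa>) \<le> 1" .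
      have "real (p q * q) * (Mk * \<tau> q powr (1 - \<kappa>)) = Mk * (x * \<tau> q powr (1 - \<kappa>))"
        unfolding nPQ by simp
      also have "\<dots> \<le> Mk * 1" using h Mk0 by (intro mult_left_mono) auto
      finally show ?thesis using A2 unfolding Mk_def by simp
    qed
    note bd = badset_bound[OF e0m k3 ik m0 P Q indE Em disE tau0 lam0 lam2 muD, of "T q"]
    have T1: "real (p q * q) * (expectation (\<lambda>\<omega>. \<bar>e0 \<omega>\<bar> powr \<kappa>) / \<tau> q powr \<kappa>) = Mk * x powr (- \<beta>)"
    proof -
      have "\<tau> q powr \<kappa> = x powr (\<alpha> * \<kappa>)" unfolding \<tau>_def x_def[symmetric] by (rule powr_powr)
      then have "x / \<tau> q powr \<kappa> = x powr (1 - \<alpha> * \<kappa>)" using x0 by (simp add: powr_diff)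
      also have "\<dots> = x powr (- \<beta>)" using kf(4) by simp
      finally have h: "x / \<tau> q powr \<kappa> = x powr (- \<beta>)" .
      have "real (p q * q) * (Mk / \<tau> q powr \<kappa>) = Mk * (x / \<tau> q powr \<kappa>)" unfolding nPQ by simp
      then show ?thesis unfolding h Mk_def .
    qed
    have lamD: "lam q * D q = K0 * ln x"
    proof -
      have "lam q * D q = K0 * sqrt (ln x / x * (x * ln x))"
        unfolding lam_def D_def x_def[symmetric] by (simp only: real_sqrt_mult ac_simps)
      also have "ln x / x * (x * ln x) = (ln x)^2" using x0 by (simp add: power2_eq_square)
      finally show ?thesis using lnx by simp
    qed
    have xlam: "x * (lam q)^2 = ln x"
      unfolding lam_def x_def[symmetric] using x0 lnx by simp
    have T2: "exp (- lam q * D q + real (p q * q) * (lam q)^2 * expectation (\<lambda>x. (e0 x)^2)) \<le> x powr (- 4)"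
    proof -
      have "- lam q * D q + real (p q * q) * (lam q)^2 * expectation (\<lambda>x. (e0 x)^2) = - (K0 - s0) * ln x"
        unfolding nPQ using lamD xlam s0_def by (simp add: algebra_simps)
      also have "\<dots> \<le> - 4 * ln x" using K0(2) lnx by (intro mult_right_mono) auto
      finally have "exp (- lam q * D q + real (p q * q) * (lam q)^2 * expectation (\<lambda>x. (e0 x)^2)) \<le> exp (- 4 * ln x)"
        by simp
      also have "exp (- 4 * ln x) = x powr (- 4)" using x0 by (simp add: powr_def)
      finally show ?thesis .
    qed
    have T1q: "1 \<le> real (T q)" using assms(12) unfolding T_def by simp
    have cI: "real (card (Idx (T q))) \<le> 12 * Ct^2 * x"
    proof -
      have "real (card (Idx (T q))) \<le> 2 * (real (T q) + 1) * (2 * real (T q) + 1)" by (rule card_Idx)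
      also have "\<dots> \<le> 2 * (2 * real (T q)) * (3 * real (T q))"
        using T1q by (intro mult_mono) auto
      also have "\<dots> = 12 * (real (T q))^2" by (simp add: power2_eq_square)
      also have "\<dots> \<le> 12 * (Ct * sqrt x)^2" using Tq T1q by (intro mult_left_mono power_mono) auto
      also have "\<dots> = 12 * Ct^2 * x" using x0 by (simp add: power_mult_distrib)
      finally show ?thesis .
    qed
    have mB: "measure M (B q) \<le> Mk * x powr (- \<beta>) + 24 * Ct^2 * x powr (- 3)"
    proof -
      have "measure M (B q) \<le> Mk * x powr (- \<beta>) + real (card (Idx (T q))) * (2 * x powr (- 4))"
        using bd unfolding B_def T1 s0_def[symmetric]
        by (smt (verit) T2 mult_left_mono of_nat_0_le_iff s0_def)
      also have "real (card (Idx (T q))) * (2 * x powr (- 4)) \<le> 12 * Ct^2 * x * (2 * x powr (- 4))"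
        using cI by (intro mult_right_mono) auto
      also have "12 * Ct^2 * x * (2 * x powr (- 4)) = 24 * Ct^2 * (x * x powr (- 4))" by simp
      also have "x * x powr (- 4) = x powr (- 3)"
      proof -
        have "x * x powr (- 4) = x powr 1 * x powr (- 4)" using x0 by simp
        also have "\<dots> = x powr (1 + - 4)" by (rule powr_add[symmetric])
        finally show ?thesis by simp
      qed
      finally show ?thesis by simp
    qed
    have cq: "0 < C1 * (real q)^2" using assms(2) Q by simp
    have "x powr (- \<beta>) \<le> (C1 * (real q)^2) powr (- \<beta>)"
      using kf(6) cq nC1[OF q1] unfolding x_def by (intro powr_mono2') auto
    also have "\<dots> = C1 powr (- \<beta>) * real q powr (- 2 * \<beta>)" using pw[OF q1] by simp
    finally have p1: "x powr (- \<beta>) \<le> C1 powr (- \<beta>) * real q powr (- 2 * \<beta>)" .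
    have "x powr (- 3) \<le> (C1 * (real q)^2) powr (- 3)"
      using cq nC1[OF q1] unfolding x_def by (intro powr_mono2') auto
    also have "\<dots> = C1 powr (- 3) * real q powr (- 6)" using pw[OF q1, of "-3"] by simp
    finally have p2: "x powr (- 3) \<le> C1 powr (- 3) * real q powr (- 6)" .
    have "measure M (B q) \<le> Mk * (C1 powr (- \<beta>) * real q powr (- 2 * \<beta>)) + 24 * Ct^2 * (C1 powr (- 3) * real q powr (- 6))"
      using mB p1 p2 Mk0 by (smt (verit) mult_left_mono zero_le_power2 mult_nonneg_nonneg)
    then show ?case unfolding u_def by (simp add: mult.assoc)
  qed
  have sumB: "summable (\<lambda>q. measure M (B q))"
    by (rule summable_comparison_test_ev[OF evB sum_u])
  have BC: "AE \<omega> in M. eventually (\<lambda>q. \<omega> \<in> space M - B q) sequentially"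
  proof (rule borel_cantelli_AE1)
    show "B q \<in> sets M" for q by (rule Bsets)
    show "emeasure M (B q) < \<infinity>" for q by (simp add: emeasure_eq_measure)
    show "summable (\<lambda>q. measure M (B q))" by (rule sumB)
  qed
  show ?thesis
    using BC
  proof (rule AE_mp)
    show "AE \<omega> in M. eventually (\<lambda>q. \<omega> \<in> space M - B q) sequentially \<longrightarrow>
      (\<lambda>q. SUP z\<in>{0..1} \<times> {0..2*pi}.
        cmod (ghat g (p q) q (t (p q * q)) (\<lambda>k. eps q k \<omega>) (fst z) (snd z)
          - integral\<^sup>L M (\<lambda>\<omega>'. ghat g (p q) q (t (p q * q)) (\<lambda>k. eps q k \<omega>') (fst z) (snd z))))
    \<in> O(\<lambda>q. real (t (p q * q)) ^ 4 * sqrt (ln (real (p q * q))) / sqrt (real (p q * q)))"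
    proof (rule AE_I2, rule impI)
      fix \<omega> assume \<omega>s: "\<omega> \<in> space M" and ev\<omega>: "eventually (\<lambda>q. \<omega> \<in> space M - B q) sequentially"
      show "(\<lambda>q. SUP z\<in>{0..1} \<times> {0..2*pi}.
        cmod (ghat g (p q) q (t (p q * q)) (\<lambda>k. eps q k \<omega>) (fst z) (snd z)
          - integral\<^sup>L M (\<lambda>\<omega>'. ghat g (p q) q (t (p q * q)) (\<lambda>k. eps q k \<omega>') (fst z) (snd z))))
        \<in> O(\<lambda>q. real (t (p q * q)) ^ 4 * sqrt (ln (real (p q * q))) / sqrt (real (p q * q)))"
      proof (rule landau_o.bigI[of "192 * K0"])
        show "0 < 192 * K0" using K0 by simp
        show "eventually (\<lambda>q. norm (SUP z\<in>{0..1} \<times> {0..2*pi}.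
          cmod (ghat g (p q) q (t (p q * q)) (\<lambda>k. eps q k \<omega>) (fst z) (snd z)
          - integral\<^sup>L M (\<lambda>\<omega>'. ghat g (p q) q (t (p q * q)) (\<lambda>k. eps q k \<omega>') (fst z) (snd z))))
          \<le> 192 * K0 * norm (real (t (p q * q)) ^ 4 * sqrt (ln (real (p q * q))) / sqrt (real (p q * q)))) sequentially"
          using ev\<omega> evn ev1q
        proof eventually_elim
          case (elim q)
          define x where "x = real (n q)"
          have x3: "3 \<le> x" using elim(2) unfolding x_def by auto
          have x0: "0 < x" using x3 by simp
          have lnx: "0 < ln x" using x3 by simp
          have q1: "1 \<le> q" using elim(3) .
          have P: "0 < p q" by (rule pq[OF q1])
          have nPQ: "real (p q * q) = x" unfolding x_def n_def ..
          define L where "L = 4 * K0 * sqrt (ln x / x)"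
          have L0: "0 \<le> L" unfolding L_def using K0 x0 lnx by simp
          have DL: "2 * (2 * (real m + 1) / real (p q * q)) * D q = (real m + 1) * L" for m
          proof -
            have h: "sqrt (x * ln x) / x = sqrt (ln x / x)"
              using x0 lnx by (simp add: real_sqrt_mult real_sqrt_divide field_simps)
            have "2 * (2 * (real m + 1) / x) * (K0 * sqrt (x * ln x)) = 4 * K0 * (real m + 1) * (sqrt (x * ln x) / x)"
              using x0 by (simp add: field_simps)
            also have "\<dots> = (real m + 1) * (4 * K0 * sqrt (ln x / x))" unfolding h by (simp add: ac_simps)
            finally show ?thesis unfolding nPQ D_def x_def[symmetric] L_def .
          qed
          have Tq1: "1 \<le> t (p q * q)" using assms(12) by simp
          have Xb: "\<bar>Re (Xs (p q) q l m (\<lambda>k. eps q k \<omega>))\<bar> \<le> (real m + 1) * L \<and>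
                    \<bar>Im (Xs (p q) q l m (\<lambda>k. eps q k \<omega>))\<bar> \<le> (real m + 1) * L"
            if "m \<le> t (p q * q)" "l \<in> {- int m..int m}" for m l
          proof -
            have eq: "Xs (p q) q l m (\<lambda>k. eps q k \<omega>) = Xs (p q) q l m (\<lambda>k. E q k \<omega>)"
              by (rule Xs_cong) (simp add: E_def)
            have mT: "m \<le> T q" using that unfolding T_def n_def by simp
            show ?thesis unfolding eq DL[symmetric]
              using badset_good[OF elim(1)[unfolded B_def] mT that(2)] by simp
          qed
          have bnd: "cmod (ghat g (p q) q (t (p q * q)) (\<lambda>k. eps q k \<omega>) (fst z) (snd z)
              - integral\<^sup>L M (\<lambda>\<omega>'. ghat g (p q) q (t (p q * q)) (\<lambda>k. eps q k \<omega>') (fst z) (snd z)))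
              \<le> 48 * real (t (p q * q)) ^ 4 * L" if z: "z \<in> {0..1} \<times> {0..2*pi}" for z
          proof -
            have r: "0 \<le> fst z" "fst z \<le> 1" using z by auto
            have "ghat g (p q) q (t (p q * q)) (\<lambda>k. eps q k \<omega>) (fst z) (snd z)
              - integral\<^sup>L M (\<lambda>\<omega>'. ghat g (p q) q (t (p q * q)) (\<lambda>k. eps q k \<omega>') (fst z) (snd z))
              = Gs (p q) q (t (p q * q)) (\<lambda>k. eps q k \<omega>) (fst z) (snd z)"
              by (rule ghat_diff[OF assms(1) intE meanE])
            also have "cmod \<dots> \<le> 48 * real (t (p q * q)) ^ 4 * L"
              by (rule Gs_bound[OF Tq1 L0 r Xb])
            finally show ?thesis .
          qed
          define f where "f z = cmod (ghat g (p q) q (t (p q * q)) (\<lambda>k. eps q k \<omega>) (fst z) (snd z)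
              - integral\<^sup>L M (\<lambda>\<omega>'. ghat g (p q) q (t (p q * q)) (\<lambda>k. eps q k \<omega>') (fst z) (snd z)))" for z
          have mem: "(0, 0) \<in> {0..1::real} \<times> {0..2*pi}" by auto
          have ne: "{0..1::real} \<times> {0..2*pi} \<noteq> {}" using mem by blast
          have bdd: "bdd_above (f ` ({0..1} \<times> {0..2*pi}))"
            using bnd unfolding f_def by (intro bdd_aboveI2) auto
          have supl: "(SUP z\<in>{0..1} \<times> {0..2*pi}. f z) \<le> 48 * real (t (p q * q)) ^ 4 * L"
            using bnd ne unfolding f_def by (intro cSUP_least) auto
          have sup0: "0 \<le> (SUP z\<in>{0..1} \<times> {0..2*pi}. f z)"
            using cSUP_upper2[OF bdd mem, of 0] unfolding f_def by simp
          have G0: "0 \<le> real (t (p q * q)) ^ 4 * sqrt (ln (real (p q * q))) / sqrt (real (p q * q))"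
            unfolding nPQ using lnx x0 by simp
          have "48 * real (t (p q * q)) ^ 4 * L = 192 * K0 * (real (t (p q * q)) ^ 4 * sqrt (ln (real (p q * q))) / sqrt (real (p q * q)))"
            unfolding L_def nPQ by (simp add: real_sqrt_divide)
          then have le: "(SUP z\<in>{0..1} \<times> {0..2*pi}. f z) \<le> 192 * K0 * (real (t (p q * q)) ^ 4 * sqrt (ln (real (p q * q))) / sqrt (real (p q * q)))"
            using supl by simp
          have e1: "norm (SUP z\<in>{0..1} \<times> {0..2*pi}. f z) = (SUP z\<in>{0..1} \<times> {0..2*pi}. f z)"
            using sup0 by (simp only: real_norm_def abs_of_nonneg)
          have e2: "norm (real (t (p q * q)) ^ 4 * sqrt (ln (real (p q * q))) / sqrt (real (p q * q)))
              = real (t (p q * q)) ^ 4 * sqrt (ln (real (p q * q))) / sqrt (real (p q * q))"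
            using G0 by (simp only: real_norm_def abs_of_nonneg)
          show ?case unfolding e2 using le e1 unfolding f_def by simp
        qed
      qed
    qed
  qed
qed


end
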